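(* Let $D$ be a connected locally finite C-homogeneous digraph and $x\in VD$. If the subdigraph induced by $N^+(x)$ or the subdigraph induced by $N^-(x)$ is isomorphic to $C_3[\bar K_n]$ for some $n\ge 1$, then $D\cong H[\bar K_n]$.
   Context: A digraph has an irreflexive, antisymmetric edge relation; connectedness and local finiteness refer to the underlying undirected graph. $D$ is C-homogeneous if every isomorphism between finite connected induced subdigraphs extends to an automorphism of $D$. $N^+(x)=\{y: xy\in ED\}$, $N^-(x)=\{y: yx\in ED\}$. $C_3$ is the directed triangle, $\bar K_n$ the digraph on $n$ vertices without edges, and $D[D']$ the lexicographic product: vertex set $VD\times VD'$, edge $(x,y)(x',y')$ iff $xx'\in ED$ or ($x=x'$ and $yy'\in ED'$). A digraph is homogeneous if every isomorphism between finite induced subdigraphs extends to an automorphism. By Lachlan's classification, a finite digraph is homogeneous iff it is isomorphic to the directed 4-cycle, to $\bar K_n$, $\bar K_n[C_3]$, $C_3[\bar K_n]$ ($n\ge1$), or to one further exceptional digraph; $H$ denotes this exceptional finite homogeneous digraph. *)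

theory Defs
  imports Main
begin

definition is_digraph :: "'a set \<Rightarrow> ('a \<times> 'a) set \<Rightarrow> bool" where
  "is_digraph V E \<longleftrightarrow> E \<subseteq> V \<times> V \<and> (\<forall>x. (x, x) \<notin> E) \<and> (\<forall>x y. (x, y) \<in> E \<longrightarrow> (y, x) \<notin> E)"

definition dg_connected :: "'a set \<Rightarrow> ('a \<times> 'a) set \<Rightarrow> bool" where
  "dg_connected V E \<longleftrightarrow> (\<forall>x\<in>V. \<forall>y\<in>V. (x, y) \<in> (E \<union> E\<inverse>)\<^sup>*)"

definition locally_finite :: "'a set \<Rightarrow> ('a \<times> 'a) set \<Rightarrow> bool" where
  "locally_finite V E \<longleftrightarrow> (\<forall>x\<in>V. finite {y. (x, y) \<in> E \<or> (y, x) \<in> E})"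

definition induced :: "('a \<times> 'a) set \<Rightarrow> 'a set \<Rightarrow> ('a \<times> 'a) set" where
  "induced E A = E \<inter> (A \<times> A)"

definition out_nbhd :: "('a \<times> 'a) set \<Rightarrow> 'a \<Rightarrow> 'a set" where
  "out_nbhd E x = {y. (x, y) \<in> E}"

definition in_nbhd :: "('a \<times> 'a) set \<Rightarrow> 'a \<Rightarrow> 'a set" where
  "in_nbhd E x = {y. (y, x) \<in> E}"

definition dg_iso :: "'a set \<Rightarrow> ('a \<times> 'a) set \<Rightarrow> 'b set \<Rightarrow> ('b \<times> 'b) set \<Rightarrow> ('a \<Rightarrow> 'b) \<Rightarrow> bool" where
  "dg_iso V1 E1 V2 E2 f \<longleftrightarrow> bij_betw f V1 V2 \<and>
     (\<forall>x\<in>V1. \<forall>y\<in>V1. (x, y) \<in> E1 \<longleftrightarrow> (f x, f y) \<in> E2)"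

definition dg_isomorphic :: "'a set \<Rightarrow> ('a \<times> 'a) set \<Rightarrow> 'b set \<Rightarrow> ('b \<times> 'b) set \<Rightarrow> bool" where
  "dg_isomorphic V1 E1 V2 E2 \<longleftrightarrow> (\<exists>f. dg_iso V1 E1 V2 E2 f)"

definition C_homogeneous :: "'a set \<Rightarrow> ('a \<times> 'a) set \<Rightarrow> bool" where
  "C_homogeneous V E \<longleftrightarrow>
     (\<forall>A B f. A \<subseteq> V \<and> B \<subseteq> V \<and> finite A \<and> dg_connected A (induced E A) \<and>
        dg_connected B (induced E B) \<and>
        dg_iso A (induced E A) B (induced E B) f \<longrightarrow>
        (\<exists>g. dg_iso V E V E g \<and> (\<forall>x\<in>A. g x = f x)))"

definition C3_V :: "nat set" where "C3_V = {0, 1, 2}"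
definition C3_E :: "(nat \<times> nat) set" where "C3_E = {(0, 1), (1, 2), (2, 0)}"

definition Kbar_V :: "nat \<Rightarrow> nat set" where "Kbar_V n = {..<n}"
definition Kbar_E :: "(nat \<times> nat) set" where "Kbar_E = {}"

definition lex_V :: "'a set \<Rightarrow> 'b set \<Rightarrow> ('a \<times> 'b) set" where
  "lex_V V1 V2 = V1 \<times> V2"
definition lex_E :: "'a set \<Rightarrow> ('a \<times> 'a) set \<Rightarrow> 'b set \<Rightarrow> ('b \<times> 'b) set \<Rightarrow> (('a \<times> 'b) \<times> ('a \<times> 'b)) set" where
  "lex_E V1 E1 V2 E2 = {((x, y), (x', y')). x \<in> V1 \<and> y \<in> V2 \<and> x' \<in> V1 \<and> y' \<in> V2 \<and>
      ((x, x') \<in> E1 \<or> (x = x' \<and> (y, y') \<in> E2))}"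

text \<open>The exceptional finite homogeneous digraph H of Lachlan's classification: the Cayley
  digraph of the quaternion group Q8 with connection set {i, j, k}. Vertices are numbered
  0..7 as 1,-1,i,-i,j,-j,k,-k (index 2*u + s, u in 1,i,j,k and s = 0 for +, 1 for -);
  x -> x*s for s in {i,j,k}.\<close>
definition H_V :: "nat set" where "H_V = {..<8}"
definition H_E :: "(nat \<times> nat) set" where
  "H_E = {(0, 2), (0, 4), (0, 6), (1, 3), (1, 5), (1, 7), (2, 1), (2, 5), (2, 6), (3, 0), (3, 4),
          (3, 7), (4, 1), (4, 2), (4, 7), (5, 0), (5, 3), (5, 6), (6, 1), (6, 3), (6, 4), (7, 0),
          (7, 2), (7, 5)}"

end

theory Submission
  imports Defs
begin


definition sc :: "nat \<Rightarrow> nat" where "sc c = Suc c mod 3"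

definition good :: "('a\<times>'a) set \<Rightarrow> 'a set \<Rightarrow> nat \<Rightarrow> ('a \<Rightarrow> nat) \<Rightarrow> bool" where
 "good E M n f \<longleftrightarrow> (\<forall>a\<in>M. f a < 3) \<and> (\<forall>c<3. card {a\<in>M. f a = c} = n)
    \<and> (\<forall>a\<in>M. \<forall>b\<in>M. (a,b)\<in>E \<longleftrightarrow> f b = sc (f a))"

definition c3k :: "('a\<times>'a) set \<Rightarrow> 'a set \<Rightarrow> nat \<Rightarrow> bool" where
 "c3k E M n \<longleftrightarrow> finite M \<and> (\<exists>f. good E M n f)"

lemma less3: "(c::nat) < 3 \<longleftrightarrow> c = 0 \<or> c = 1 \<or> c = 2" by auto
lemma c3e: assumes "p < 3" "q < 3" shows "(p,q) \<in> C3_E \<longleftrightarrow> q = sc p"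
proof -
  have "p = 0 \<or> p = 1 \<or> p = 2" "q = 0 \<or> q = 1 \<or> q = 2" using assms by auto
  then show ?thesis by (elim disjE) (auto simp: C3_E_def sc_def)
qed
lemma sc_lt: "sc c < 3" by (simp add: sc_def)
lemma sc3: "c < 3 \<Longrightarrow> sc (sc (sc c)) = c" by (auto simp: sc_def mod_Suc)
lemma sc_ne: "c < 3 \<Longrightarrow> sc c \<noteq> c" by (auto simp: sc_def mod_Suc)
lemma sc_ne2: "c < 3 \<Longrightarrow> sc (sc c) \<noteq> c" by (auto simp: sc_def mod_Suc)
lemma sc_tri: "c < 3 \<Longrightarrow> d < 3 \<Longrightarrow> d = c \<or> d = sc c \<or> c = sc d"
  by (auto simp: sc_def mod_Suc)
lemma sc_cases: "c < 3 \<Longrightarrow> d < 3 \<Longrightarrow> d = c \<or> d = sc c \<or> d = sc (sc c)"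
  by (auto simp: sc_def mod_Suc)
lemma sc_inj: "c < 3 \<Longrightarrow> d < 3 \<Longrightarrow> sc c = sc d \<Longrightarrow> c = d"
  by (auto simp: sc_def mod_Suc split: if_splits)

lemma iso_c3k:
  assumes "dg_isomorphic M (induced E M) (lex_V C3_V (Kbar_V n)) (lex_E C3_V C3_E (Kbar_V n) Kbar_E)"
  shows "c3k E M n"
proof -
  obtain \<phi> where bij: "bij_betw \<phi> M (C3_V \<times> {..<n})"
    and ed: "\<forall>a\<in>M. \<forall>b\<in>M. (a,b) \<in> induced E M \<longleftrightarrow> (\<phi> a, \<phi> b) \<in> lex_E C3_V C3_E (Kbar_V n) Kbar_E"
    using assms unfolding dg_isomorphic_def dg_iso_def lex_V_def Kbar_V_def by blast
  have fin: "finite M" using bij bij_betw_finite[of \<phi> M] by (simp add: C3_V_def)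
  define f where "f a = fst (\<phi> a)" for a
  have rng: "\<And>a. a \<in> M \<Longrightarrow> \<phi> a \<in> C3_V \<times> {..<n}" using bij bij_betwE by blast
  have A: "\<forall>a\<in>M. f a < 3" using rng by (force simp: f_def C3_V_def)
  have B: "card {a\<in>M. f a = c} = n" if "c < 3" for c
  proof -
    have inj: "inj_on \<phi> {a\<in>M. f a = c}" using bij by (auto simp: bij_betw_def intro: inj_on_subset)
    have "\<phi> ` {a\<in>M. f a = c} = {c} \<times> {..<n}"
    proof
      show "\<phi> ` {a\<in>M. f a = c} \<subseteq> {c} \<times> {..<n}" using rng by (force simp: f_def)
      show "{c} \<times> {..<n} \<subseteq> \<phi> ` {a\<in>M. f a = c}"
      proof
        fix p assume p: "p \<in> {c} \<times> {..<n}"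
        then have "p \<in> C3_V \<times> {..<n}" using that by (auto simp: C3_V_def)
        then obtain a where "a \<in> M" "\<phi> a = p" using bij by (metis bij_betw_imp_surj_on imageE)
        then show "p \<in> \<phi> ` {a\<in>M. f a = c}" using p by (auto simp: f_def)
      qed
    qed
    then have "card {a\<in>M. f a = c} = card ({c} \<times> {..<n})" using card_image[OF inj] by simp
    then show ?thesis by simp
  qed
  have C: "(a,b)\<in>E \<longleftrightarrow> f b = sc (f a)" if "a\<in>M" "b\<in>M" for a b
  proof -
    obtain p i where pa: "\<phi> a = (p,i)" by fastforce
    obtain q j where pb: "\<phi> b = (q,j)" by fastforce
    have "p < 3" "q < 3" "i < n" "j < n" using rng[OF that(1)] rng[OF that(2)] pa pb by (auto simp: C3_V_def)
    have "(a,b)\<in>E \<longleftrightarrow> (a,b) \<in> induced E M" using that by (simp add: induced_def)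
    also have "\<dots> \<longleftrightarrow> (\<phi> a, \<phi> b) \<in> lex_E C3_V C3_E (Kbar_V n) Kbar_E" using ed that by blast
    also have "\<dots> \<longleftrightarrow> (p,q) \<in> C3_E" using \<open>p<3\<close> \<open>q<3\<close> \<open>i<n\<close> \<open>j<n\<close>
      by (auto simp: pa pb lex_E_def Kbar_E_def C3_V_def Kbar_V_def)
    also have "\<dots> \<longleftrightarrow> q = sc p" using \<open>p<3\<close> \<open>q<3\<close> by (rule c3e)
    finally show ?thesis by (simp add: f_def pa pb)
  qed
  show ?thesis unfolding c3k_def good_def using fin A B C by blast
qed

lemma c3k_rev:
  assumes "c3k E M n" shows "c3k (E\<inverse>) M n"
proof -
  obtain f where f: "good E M n f" and fin: "finite M" using assms by (auto simp: c3k_def)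
  define g where "g a = (if f a = 0 then 0 else 3 - f a)" for a
  have gg: "good (E\<inverse>) M n g"
    unfolding good_def
  proof (intro conjI ballI allI impI)
    fix a assume "a \<in> M" then show "g a < 3" using f by (auto simp: g_def good_def)
  next
    fix c :: nat assume c: "c < 3"
    define c' where "c' = (if c = 0 then 0 else 3 - c)"
    have "c' < 3" using c by (auto simp: c'_def)
    have "{a\<in>M. g a = c} = {a\<in>M. f a = c'}" using f c by (auto simp: g_def c'_def good_def)
    then show "card {a\<in>M. g a = c} = n" using f \<open>c'<3\<close> by (simp add: good_def)
  next
    fix a b assume ab: "a \<in> M" "b \<in> M"
    have "f a < 3" "f b < 3" using f ab by (auto simp: good_def)
    then show "(a,b) \<in> E\<inverse> \<longleftrightarrow> g b = sc (g a)" using f ab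
      by (auto simp: good_def g_def sc_def mod_Suc)
  qed
  then show ?thesis using fin by (auto simp: c3k_def)
qed



lemma conn_star:
  assumes "c \<in> A" "\<forall>p\<in>A. (c,p) \<in> (R \<union> R\<inverse>)\<^sup>*"
  shows "dg_connected A R"
  unfolding dg_connected_def
proof (intro ballI)
  fix p q assume "p \<in> A" "q \<in> A"
  have "(c,p) \<in> (R \<union> R\<inverse>)\<^sup>*" "(c,q) \<in> (R \<union> R\<inverse>)\<^sup>*" using assms \<open>p\<in>A\<close> \<open>q\<in>A\<close> by auto
  have "(p,c) \<in> ((R \<union> R\<inverse>)\<inverse>)\<^sup>*" using \<open>(c,p) \<in> _\<close> by (simp add: rtrancl_converseI)
  also have "(R \<union> R\<inverse>)\<inverse> = R \<union> R\<inverse>" by auto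
  finally have "(p,c) \<in> (R \<union> R\<inverse>)\<^sup>*" .
  then show "(p,q) \<in> (R \<union> R\<inverse>)\<^sup>*" using \<open>(c,q) \<in> _\<close> by (rule rtrancl_trans)
qed

lemma step1: "(a,b) \<in> R \<Longrightarrow> (a,b) \<in> (R \<union> R\<inverse>)\<^sup>*" by auto
lemma step1r: "(b,a) \<in> R \<Longrightarrow> (a,b) \<in> (R \<union> R\<inverse>)\<^sup>*" by auto

definition aut :: "'a set \<Rightarrow> ('a\<times>'a) set \<Rightarrow> ('a \<Rightarrow> 'a) \<Rightarrow> bool" where
  "aut V E g \<longleftrightarrow> dg_iso V E V E g"

lemma aut_mem: "aut V E g \<Longrightarrow> a \<in> V \<Longrightarrow> g a \<in> V"
  by (auto simp: aut_def dg_iso_def bij_betw_def)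
lemma aut_surj: "aut V E g \<Longrightarrow> y \<in> V \<Longrightarrow> \<exists>a\<in>V. g a = y"
  unfolding aut_def dg_iso_def bij_betw_def by (metis imageE)
lemma aut_inj: "aut V E g \<Longrightarrow> inj_on g V"
  by (auto simp: aut_def dg_iso_def bij_betw_def)
lemma aut_edge: "aut V E g \<Longrightarrow> a \<in> V \<Longrightarrow> b \<in> V \<Longrightarrow> (g a, g b) \<in> E \<longleftrightarrow> (a,b) \<in> E"
  by (auto simp: aut_def dg_iso_def)

lemma chom_ext:
  assumes "C_homogeneous V E" "A \<subseteq> V" "B \<subseteq> V" "finite A" "dg_connected A (induced E A)"
    "dg_connected B (induced E B)" "dg_iso A (induced E A) B (induced E B) f"
  shows "\<exists>g. aut V E g \<and> (\<forall>x\<in>A. g x = f x)"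
  using assms unfolding C_homogeneous_def aut_def by blast

lemma vtrans:
  assumes "C_homogeneous V E" "is_digraph V E" "a \<in> V" "b \<in> V"
  shows "\<exists>g. aut V E g \<and> g a = b"
proof -
  have irr: "\<And>z. (z,z) \<notin> E" using assms(2) by (auto simp: is_digraph_def)
  have c1: "dg_connected {z} (induced E {z})" for z by (rule conn_star[of z]) auto
  have "dg_iso {a} (induced E {a}) {b} (induced E {b}) (\<lambda>_. b)"
    by (auto simp: dg_iso_def bij_betw_def induced_def irr)
  from chom_ext[OF assms(1) _ _ _ c1 c1 this] assms(3,4) show ?thesis by auto
qed

lemma atrans:
  assumes "C_homogeneous V E" "is_digraph V E" "(a,b) \<in> E" "(a',b') \<in> E"
  shows "\<exists>g. aut V E g \<and> g a = a' \<and> g b = b'"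
proof -
  have irr: "\<And>z. (z,z) \<notin> E" and asy: "\<And>y z. (y,z)\<in>E \<Longrightarrow> (z,y) \<notin> E" and sub: "E \<subseteq> V \<times> V"
    using assms(2) by (auto simp: is_digraph_def)
  have ne: "a \<noteq> b" "a' \<noteq> b'" using irr assms(3,4) by auto
  define f where "f z = (if z = a then a' else b')" for z
  have c1: "dg_connected {p,q} (induced E {p,q})" if "(p,q) \<in> E" for p q
    by (rule conn_star[of p]) (auto simp: induced_def that intro!: step1)
  have "dg_iso {a,b} (induced E {a,b}) {a',b'} (induced E {a',b'}) f"
    unfolding dg_iso_def bij_betw_def inj_on_def
    using ne assms(3,4) irr asy by (auto simp: f_def induced_def)
  from chom_ext[OF assms(1) _ _ _ c1[OF assms(3)] c1[OF assms(4)] this] sub assms(3,4) ne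
  show ?thesis by (auto simp: f_def)
qed

lemma orbit3:
  assumes "C_homogeneous V E" "is_digraph V E" "(s,s') \<in> E" "(s',b) \<in> E" "(b,s) \<in> E"
     "(s',b') \<in> E" "(b',s) \<in> E"
  shows "\<exists>g. aut V E g \<and> g s = s \<and> g s' = s' \<and> g b = b'"
proof -
  have irr: "\<And>z. (z,z) \<notin> E" and asy: "\<And>y z. (y,z)\<in>E \<Longrightarrow> (z,y) \<notin> E" and sub: "E \<subseteq> V \<times> V"
    using assms(2) by (auto simp: is_digraph_def)
  have ne: "s \<noteq> s'" "b \<noteq> s" "b \<noteq> s'" "b' \<noteq> s" "b' \<noteq> s'" using irr asy assms(3-7) by metis+
  define f where "f z = (if z = b then b' else z)" for z
  have c1: "dg_connected {s,s',c} (induced E {s,s',c})" if "(s',c) \<in> E" "(c,s) \<in> E" for c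
  proof (rule conn_star[of s])
    have 1: "(s,s') \<in> (induced E {s,s',c} \<union> (induced E {s,s',c})\<inverse>)\<^sup>*"
      by (rule step1) (auto simp: induced_def assms(3))
    have 2: "(s',c) \<in> (induced E {s,s',c} \<union> (induced E {s,s',c})\<inverse>)\<^sup>*"
      by (rule step1) (auto simp: induced_def that)
    show "\<forall>p\<in>{s,s',c}. (s,p) \<in> (induced E {s,s',c} \<union> (induced E {s,s',c})\<inverse>)\<^sup>*"
      using 1 2 rtrancl_trans[OF 1 2] by auto
  qed auto
  have "dg_iso {s,s',b} (induced E {s,s',b}) {s,s',b'} (induced E {s,s',b'}) f"
    unfolding dg_iso_def bij_betw_def inj_on_def
    using ne assms(3-7) irr asy by (auto simp: f_def induced_def)
  from chom_ext[OF assms(1) _ _ _ c1[OF assms(4,5)] c1[OF assms(6,7)] this] sub assms(3-7) ne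
  show ?thesis by (auto simp: f_def)
qed



lemma c3k_transfer:
  assumes "aut V E g" "is_digraph V E" "u \<in> V" "g u = x" "c3k E (out_nbhd E x) n"
  shows "c3k E (out_nbhd E u) n"
proof -
  have sub: "E \<subseteq> V \<times> V" using assms(2) by (auto simp: is_digraph_def)
  obtain f where f: "good E (out_nbhd E x) n f" and fin: "finite (out_nbhd E x)"
    using assms(5) unfolding c3k_def by blast
  have NV: "out_nbhd E u \<subseteq> V" using sub by (auto simp: out_nbhd_def)
  have inj: "inj_on g (out_nbhd E u)" using aut_inj[OF assms(1)] NV inj_on_subset by blast
  have img: "g ` out_nbhd E u = out_nbhd E x"
  proof
    show "g ` out_nbhd E u \<subseteq> out_nbhd E x"
    proof
      fix y assume "y \<in> g ` out_nbhd E u"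
      then obtain a where a: "(u,a) \<in> E" "y = g a" by (auto simp: out_nbhd_def)
      then have "a \<in> V" using sub by auto
      then have "(g u, g a) \<in> E" using aut_edge[OF assms(1) assms(3)] a by simp
      then show "y \<in> out_nbhd E x" using a assms(4) by (simp add: out_nbhd_def)
    qed
    show "out_nbhd E x \<subseteq> g ` out_nbhd E u"
    proof
      fix y assume y: "y \<in> out_nbhd E x"
      then have "y \<in> V" using sub by (auto simp: out_nbhd_def)
      then obtain a where a: "a \<in> V" "g a = y" using aut_surj[OF assms(1)] by blast
      then have "(u,a) \<in> E" using aut_edge[OF assms(1) assms(3) a(1)] y assms(4) by (simp add: out_nbhd_def)
      then show "y \<in> g ` out_nbhd E u" using a by (auto simp: out_nbhd_def)
    qed
  qed
  have "finite (g ` out_nbhd E u)" using fin img by simp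
  then have fin2: "finite (out_nbhd E u)" using finite_imageD inj by blast
  have "good E (out_nbhd E u) n (f \<circ> g)"
    unfolding good_def
  proof (intro conjI ballI allI impI)
    fix a assume "a \<in> out_nbhd E u"
    then have "g a \<in> out_nbhd E x" using img by blast
    then show "(f \<circ> g) a < 3" using f unfolding good_def by simp
  next
    fix c :: nat assume c: "c < 3"
    have "g ` {a \<in> out_nbhd E u. (f\<circ>g) a = c} = {b \<in> out_nbhd E x. f b = c}"
    proof
      show "g ` {a \<in> out_nbhd E u. (f\<circ>g) a = c} \<subseteq> {b \<in> out_nbhd E x. f b = c}"
      proof (rule image_subsetI)
        fix a assume a: "a \<in> {a \<in> out_nbhd E u. (f\<circ>g) a = c}"
        then have "g a \<in> out_nbhd E x" using img by blast
        then show "g a \<in> {b \<in> out_nbhd E x. f b = c}" using a by simp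
      qed
      show "{b \<in> out_nbhd E x. f b = c} \<subseteq> g ` {a \<in> out_nbhd E u. (f\<circ>g) a = c}"
      proof
        fix b assume b: "b \<in> {b \<in> out_nbhd E x. f b = c}"
        have "b \<in> g ` out_nbhd E u" using b img by simp
        then obtain a where "a \<in> out_nbhd E u" "g a = b" by (rule imageE) simp
        then show "b \<in> g ` {a \<in> out_nbhd E u. (f\<circ>g) a = c}" using b by auto
      qed
    qed
    moreover have inj2: "inj_on g {a \<in> out_nbhd E u. (f\<circ>g) a = c}"
      by (rule inj_on_subset[OF inj]) simp
    ultimately have "card {a \<in> out_nbhd E u. (f\<circ>g) a = c} = card {b \<in> out_nbhd E x. f b = c}"
      using card_image[OF inj2] by simp
    then show "card {a \<in> out_nbhd E u. (f\<circ>g) a = c} = n" using f c unfolding good_def by simp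
  next
    fix a b assume ab: "a \<in> out_nbhd E u" "b \<in> out_nbhd E u"
    then have "a \<in> V" "b \<in> V" using NV by auto
    then have "(a,b) \<in> E \<longleftrightarrow> (g a, g b) \<in> E" using aut_edge[OF assms(1)] by simp
    also have "\<dots> \<longleftrightarrow> f (g b) = sc (f (g a))"
    proof -
      have "g a \<in> out_nbhd E x" "g b \<in> out_nbhd E x" using ab img by auto
      moreover have h: "\<forall>p\<in>out_nbhd E x. \<forall>q\<in>out_nbhd E x. (p,q)\<in>E \<longleftrightarrow> f q = sc (f p)"
        using f unfolding good_def by (elim conjE)
      ultimately show ?thesis using h by simp
    qed
    finally show "(a,b) \<in> E \<longleftrightarrow> (f\<circ>g) b = sc ((f\<circ>g) a)" by simp
  qed
  then show ?thesis using fin2 by (auto simp: c3k_def)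
qed

locale ctx =
  fixes V :: "'a set" and E :: "('a\<times>'a) set" and n :: nat and x0 :: 'a
  assumes dig: "is_digraph V E" and ch: "C_homogeneous V E" and n1: "n \<ge> 1"
    and x0V: "x0 \<in> V" and c3x: "c3k E (out_nbhd E x0) n"
begin

abbreviation N where "N u \<equiv> out_nbhd E u"

lemma irr: "(z,z) \<notin> E" using dig by (auto simp: is_digraph_def)
lemma asy: "(y,z) \<in> E \<Longrightarrow> (z,y) \<notin> E" using dig by (auto simp: is_digraph_def)
lemma subV: "(y,z) \<in> E \<Longrightarrow> y \<in> V \<and> z \<in> V" using dig by (auto simp: is_digraph_def)
lemma N_iff[simp]: "a \<in> N u \<longleftrightarrow> (u,a) \<in> E" by (simp add: out_nbhd_def)

lemma c3all: "u \<in> V \<Longrightarrow> c3k E (N u) n"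
  using vtrans[OF ch dig _ x0V] c3k_transfer[OF _ dig _ _ c3x] by blast

definition f :: "'a \<Rightarrow> 'a \<Rightarrow> nat" where "f u = (SOME h. good E (N u) n h)"
definition cl :: "'a \<Rightarrow> nat \<Rightarrow> 'a set" where "cl u c = {a \<in> N u. f u a = c}"

lemma fgood: assumes "u \<in> V" shows "good E (N u) n (f u)"
proof -
  have "\<exists>h. good E (N u) n h" using c3all[OF assms] by (simp add: c3k_def)
  then show ?thesis unfolding f_def by (rule someI_ex)
qed
lemma finN: "u \<in> V \<Longrightarrow> finite (N u)" using c3all by (simp add: c3k_def)
lemma B1: "u \<in> V \<Longrightarrow> (u,a) \<in> E \<Longrightarrow> f u a < 3" using fgood by (auto simp: good_def)
lemma B3: "u \<in> V \<Longrightarrow> (u,a) \<in> E \<Longrightarrow> (u,b) \<in> E \<Longrightarrow> (a,b) \<in> E \<longleftrightarrow> f u b = sc (f u a)"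
  using fgood by (auto simp: good_def)
lemma B2: "u \<in> V \<Longrightarrow> c < 3 \<Longrightarrow> card (cl u c) = n" using fgood by (auto simp: good_def cl_def)
lemma finc: assumes "u \<in> V" shows "finite (cl u c)"
proof -
  have "cl u c \<subseteq> N u" unfolding cl_def by blast
  then show ?thesis using finN[OF assms] finite_subset by blast
qed
lemma clne: "u \<in> V \<Longrightarrow> c < 3 \<Longrightarrow> \<exists>a. a \<in> cl u c"
  using B2 n1 by (metis card.empty ex_in_conv not_one_le_zero)
lemma memcl: "a \<in> cl u c \<longleftrightarrow> (u,a) \<in> E \<and> f u a = c" by (simp add: cl_def)
lemma B4: "u \<in> V \<Longrightarrow> c < 3 \<Longrightarrow> (u,a) \<in> E \<Longrightarrow> a \<in> cl u c \<or> a \<in> cl u (sc c) \<or> a \<in> cl u (sc (sc c))"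
  using sc_cases[of c "f u a"] B1[of u a] by (simp add: memcl)
lemma B4s: assumes "u \<in> V" "c < 3" shows "N u = cl u c \<union> cl u (sc c) \<union> cl u (sc (sc c))"
proof (rule equalityI)
  show "N u \<subseteq> cl u c \<union> cl u (sc c) \<union> cl u (sc (sc c))"
  proof
    fix a assume "a \<in> N u"
    then have "(u,a) \<in> E" by simp
    then show "a \<in> cl u c \<union> cl u (sc c) \<union> cl u (sc (sc c))" using B4[OF assms] by blast
  qed
  show "cl u c \<union> cl u (sc c) \<union> cl u (sc (sc c)) \<subseteq> N u" by (auto simp: memcl)
qed
lemma B7: assumes "u \<in> V" "a \<in> cl u c" "b \<in> cl u c" shows "(a,b) \<notin> E"
proof -
  have "(u,a) \<in> E" "(u,b) \<in> E" "f u a = c" "f u b = c" using assms by (auto simp: memcl)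
  moreover have "c < 3" using B1[OF assms(1)] calculation by auto
  ultimately show ?thesis using B3[OF assms(1)] sc_ne by metis
qed
lemma clarc: "u \<in> V \<Longrightarrow> a \<in> cl u c \<Longrightarrow> b \<in> cl u (sc c) \<Longrightarrow> (a,b) \<in> E"
  using B3[of u a b] by (simp add: memcl)
lemma clarc2: "u \<in> V \<Longrightarrow> a \<in> cl u (sc (sc c)) \<Longrightarrow> b \<in> cl u c \<Longrightarrow> c < 3 \<Longrightarrow> (a,b) \<in> E"
  using B3[of u a b] sc3[of c] by (simp add: memcl)
lemma cl_sub_eq: "u \<in> V \<Longrightarrow> c < 3 \<Longrightarrow> A \<subseteq> cl u c \<Longrightarrow> card A = n \<Longrightarrow> A = cl u c"
  using B2 finc by (metis card_subset_eq)
lemma nonadj_same: assumes "u \<in> V" "(u,a) \<in> E" "(u,b) \<in> E" "(a,b) \<notin> E" "(b,a) \<notin> E"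
  shows "f u a = f u b"
proof -
  have "f u b = f u a \<or> f u b = sc (f u a) \<or> f u a = sc (f u b)"
    using sc_tri B1[OF assms(1,2)] B1[OF assms(1,3)] by blast
  then show ?thesis using B3[OF assms(1,2,3)] B3[OF assms(1,3,2)] assms(4,5) by auto
qed
lemma B6:
  assumes "u \<in> V" "A \<subseteq> N u" "card A = n" "\<forall>p\<in>A. \<forall>q\<in>A. (p,q) \<notin> E" "a \<in> A"
  shows "A = cl u (f u a)"
proof -
  have "A \<subseteq> cl u (f u a)"
  proof
    fix b assume b: "b \<in> A"
    have ua: "(u,a) \<in> E" "(u,b) \<in> E" using assms(2,5) b by auto
    have "f u a = f u b"
    proof (cases "a = b")
      case False
      have "(a,b) \<notin> E" "(b,a) \<notin> E" using assms(4,5) b by auto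
      then show ?thesis using nonadj_same[OF assms(1) ua] by simp
    qed simp
    then show "b \<in> cl u (f u a)" using ua by (simp add: memcl)
  qed
  moreover have "f u a < 3" using B1[OF assms(1)] assms(2,5) by auto
  ultimately show ?thesis using cl_sub_eq[OF assms(1)] assms(3) by blast
qed

lemma L1: assumes "(u,v) \<in> E" shows "N u \<inter> N v = cl u (sc (f u v))"
proof -
  have uV: "u \<in> V" using subV assms by auto
  have "\<And>b. (u,b) \<in> E \<Longrightarrow> (v,b) \<in> E \<longleftrightarrow> f u b = sc (f u v)" using B3[OF uV assms] by blast
  then show ?thesis unfolding cl_def by auto
qed
lemma L1':
  assumes "(u,v) \<in> E" "(u,w) \<in> E" "(v,w) \<in> E"
  shows "N u \<inter> N v = cl v (f v w)"
proof -
  have uV: "u \<in> V" "v \<in> V" using subV assms by auto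
  have "card (N u \<inter> N v) = n" using L1[OF assms(1)] B2[OF uV(1) sc_lt] by simp
  moreover have "\<forall>p\<in>N u \<inter> N v. \<forall>q\<in>N u \<inter> N v. (p,q) \<notin> E"
    unfolding L1[OF assms(1)] using B7[OF uV(1)] by blast
  moreover have "N u \<inter> N v \<subseteq> N v" by blast
  moreover have "w \<in> N u \<inter> N v" using assms by simp
  ultimately show ?thesis using B6[OF uV(2)] by blast
qed

lemma CIN: assumes "(s,s') \<in> E" shows "\<exists>v. (v,s) \<in> E \<and> (v,s') \<in> E"
proof -
  obtain a where a: "a \<in> cl x0 0" using clne x0V by fastforce
  obtain b where b: "b \<in> cl x0 (sc 0)" using clne x0V sc_lt by blast
  have ab: "(a,b) \<in> E" using clarc[OF x0V a b] .
  obtain g where g: "aut V E g" "g a = s" "g b = s'" using atrans[OF ch dig ab assms] by blast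
  have "a \<in> V" "b \<in> V" using subV ab by auto
  have "(x0,a) \<in> E" "(x0,b) \<in> E" using a b by (auto simp: memcl)
  then have "(g x0, s) \<in> E" "(g x0, s') \<in> E" using aut_edge[OF g(1) x0V] \<open>a\<in>V\<close> \<open>b\<in>V\<close> g by auto
  then show ?thesis by blast
qed

definition T where "T u w = {y. (w,y) \<in> E \<and> (y,u) \<in> E}"
definition K2 where "K2 s s' \<longleftrightarrow> (\<forall>y\<in>T s s'. \<forall>w\<in>N s \<inter> N s'. (y,w) \<in> E)"

lemma RT:
  assumes "(v,s) \<in> E" "(v,s') \<in> E" "(s,s') \<in> E"
  shows "cl v (sc (sc (f v s))) \<subseteq> T s s'"
proof
  fix r assume r: "r \<in> cl v (sc (sc (f v s)))"
  have vV: "v \<in> V" using subV assms by auto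
  have fs: "f v s < 3" using B1 vV assms by auto
  have vr: "(v,r) \<in> E" using r by (simp add: memcl)
  have 1: "f v s' = sc (f v s)" using B3[OF vV assms(1,2)] assms(3) by simp
  have "(r,s) \<in> E" using B3[OF vV vr assms(1)] r sc3[OF fs] by (simp add: memcl)
  moreover have "(s',r) \<in> E" using B3[OF vV assms(2) vr] r 1 by (simp add: memcl)
  ultimately show "r \<in> T s s'" by (simp add: T_def)
qed

end

context ctx begin

lemma Tmem: "y \<in> T u w \<longleftrightarrow> (w,y) \<in> E \<and> (y,u) \<in> E" by (simp add: T_def)
lemma sc_lt3: "c < 3 \<Longrightarrow> sc c < 3" by (rule sc_lt)
lemma Vof: "(a,b) \<in> E \<Longrightarrow> a \<in> V" "(a,b) \<in> E \<Longrightarrow> b \<in> V" using subV by auto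

lemma Sne: assumes "(a,b) \<in> E" obtains z where "(a,z) \<in> E" "(b,z) \<in> E"
proof -
  obtain z where "z \<in> cl a (sc (f a b))" using clne[OF Vof(1)[OF assms] sc_lt] by blast
  then have "z \<in> N a \<inter> N b" using L1[OF assms] by simp
  then have "(a,z) \<in> E" "(b,z) \<in> E" by auto
  then show ?thesis by (rule that)
qed

lemma KIND2:
  assumes st: "(s,s') \<in> E" and k: "K2 s s'" and w: "(s,w) \<in> E" "(s',w) \<in> E"
  shows "T s s' = cl s' (sc (sc (f s' w)))"
proof -
  have sV: "s \<in> V" "s' \<in> V" using Vof st by auto
  have Seq: "N s \<inter> N s' = cl s' (f s' w)" using L1'[OF st w] .
  define c where "c = f s' w"
  have c3: "c < 3" using B1[OF sV(2) w(2)] c_def by simp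
  obtain v where v: "(v,s) \<in> E" "(v,s') \<in> E" using CIN[OF st] by blast
  have vV: "v \<in> V" using Vof v by auto
  have R: "cl v (sc (sc (f v s))) \<subseteq> T s s'" using RT[OF v st] .
  have Tsub: "T s s' \<subseteq> cl s' (sc (sc c))"
  proof
    fix y assume y: "y \<in> T s s'"
    then have sy: "(s',y) \<in> E" by (simp add: Tmem)
    have "w \<in> N s \<inter> N s'" using w by simp
    then have "(y,w) \<in> E" using k y unfolding K2_def by blast
    then have "c = sc (f s' y)" using B3[OF sV(2) sy w(2)] c_def by simp
    then have "f s' y = sc (sc c)" using sc3[OF B1[OF sV(2) sy]] by simp
    then show "y \<in> cl s' (sc (sc c))" using sy by (simp add: memcl)
  qed
  have "cl v (sc (sc (f v s))) = cl s' (sc (sc c))"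
    using cl_sub_eq[OF sV(2) sc_lt] R Tsub B2[OF vV sc_lt] by blast
  then show ?thesis using R Tsub c_def by blast
qed

lemma KIND1:
  assumes st: "(s,s') \<in> E" and k: "\<not> K2 s s'" and w: "(s,w) \<in> E" "(s',w) \<in> E"
  shows "T s s' = cl s' (sc (f s' w))"
proof -
  have sV: "s \<in> V" "s' \<in> V" using Vof st by auto
  have Seq: "N s \<inter> N s' = cl s' (f s' w)" using L1'[OF st w] .
  define c where "c = f s' w"
  have c3: "c < 3" using B1[OF sV(2) w(2)] c_def by simp
  obtain y0 w0 where y0: "y0 \<in> T s s'" and w0: "w0 \<in> N s \<inter> N s'" and nw: "(y0,w0) \<notin> E"
    using k unfolding K2_def by blast
  obtain v where v: "(v,s) \<in> E" "(v,s') \<in> E" using CIN[OF st] by blast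
  have vV: "v \<in> V" using Vof v by auto
  have R: "cl v (sc (sc (f v s))) \<subseteq> T s s'" using RT[OF v st] .
  have Tsub: "T s s' \<subseteq> cl s' (sc c)"
  proof
    fix y assume y: "y \<in> T s s'"
    then have sy: "(s',y) \<in> E" and ys: "(y,s) \<in> E" by (auto simp: Tmem)
    have fy: "f s' y < 3" using B1[OF sV(2) sy] .
    have "f s' y \<noteq> c"
    proof
      assume "f s' y = c"
      then have "y \<in> N s \<inter> N s'" using Seq sy c_def by (simp add: memcl)
      then show False using ys asy by auto
    qed
    moreover have "f s' y \<noteq> sc (sc c)"
    proof
      assume fyc: "f s' y = sc (sc c)"
      have allw: "(y,w') \<in> E" if "w' \<in> N s \<inter> N s'" for w'
      proof -
        have "w' \<in> cl s' c" using that Seq c_def by simp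
        moreover have "y \<in> cl s' (sc (sc c))" using fyc sy by (simp add: memcl)
        ultimately show ?thesis using clarc2[OF sV(2) _ _ c3] by blast
      qed
      have y0m: "(s',y0) \<in> E" "(y0,s) \<in> E" using y0 by (auto simp: Tmem)
      obtain g where g: "aut V E g" "g s = s" "g s' = s'" "g y = y0"
        using orbit3[OF ch dig st sy ys y0m] by blast
      have w0V: "w0 \<in> V" using w0 Vof by auto
      obtain w1 where w1: "w1 \<in> V" "g w1 = w0" using aut_surj[OF g(1) w0V] by blast
      have "(s,w1) \<in> E" using aut_edge[OF g(1) sV(1) w1(1)] g w1 w0 by simp
      moreover have "(s',w1) \<in> E" using aut_edge[OF g(1) sV(2) w1(1)] g w1 w0 by simp
      ultimately have "(y,w1) \<in> E" using allw by simp
      moreover have yV: "y \<in> V" using Vof sy by auto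
      ultimately have "(y0,w0) \<in> E" using aut_edge[OF g(1) yV w1(1)] g w1 by simp
      then show False using nw by simp
    qed
    ultimately have "f s' y = sc c" using sc_cases[OF c3 fy] by blast
    then show "y \<in> cl s' (sc c)" using sy by (simp add: memcl)
  qed
  have "cl v (sc (sc (f v s))) = cl s' (sc c)"
    using cl_sub_eq[OF sV(2) sc_lt] R Tsub B2[OF vV sc_lt] by blast
  then show ?thesis using R Tsub c_def by blast
qed

lemma K2inv:
  assumes g: "aut V E g" and ab: "(a,b) \<in> E" and k: "K2 a b"
  shows "K2 (g a) (g b)"
  unfolding K2_def
proof (intro ballI)
  fix y w assume y: "y \<in> T (g a) (g b)" and w: "w \<in> N (g a) \<inter> N (g b)"
  have aV: "a \<in> V" "b \<in> V" using Vof ab by auto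
  have yw: "(g b, y) \<in> E" "(y, g a) \<in> E" "(g a, w) \<in> E" "(g b, w) \<in> E" using y w by (auto simp: Tmem)
  have "y \<in> V" "w \<in> V" using Vof yw by auto
  then obtain y1 w1 where y1: "y1 \<in> V" "g y1 = y" and w1: "w1 \<in> V" "g w1 = w"
    using aut_surj[OF g] by metis
  have "(b,y1) \<in> E" using aut_edge[OF g aV(2) y1(1)] yw y1 by simp
  moreover have "(y1,a) \<in> E" using aut_edge[OF g y1(1) aV(1)] yw y1 by simp
  ultimately have "y1 \<in> T a b" by (simp add: Tmem)
  moreover have "(a,w1) \<in> E" using aut_edge[OF g aV(1) w1(1)] yw w1 by simp
  moreover have "(b,w1) \<in> E" using aut_edge[OF g aV(2) w1(1)] yw w1 by simp
  ultimately have "(y1,w1) \<in> E" using k unfolding K2_def by simp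
  then show "(y,w) \<in> E" using aut_edge[OF g y1(1) w1(1)] y1 w1 by simp
qed

lemma K1prop:
  assumes va: "(v,a) \<in> E" and k: "\<not> K2 v a" and y: "y \<in> T v a" and s: "(v,s) \<in> E" "(a,s) \<in> E"
  shows "(s,y) \<in> E"
proof -
  have aV: "a \<in> V" using Vof va by auto
  have "T v a = cl a (sc (f a s))" using KIND1[OF va k s] .
  then have "y \<in> cl a (sc (f a s))" using y by simp
  moreover have "s \<in> cl a (f a s)" using s by (simp add: memcl)
  ultimately show ?thesis using clarc[OF aV] by blast
qed

lemma sc012: "sc 0 = 1" "sc 1 = 2" "sc 2 = 0" by (auto simp: sc_def)

lemma K2all: assumes ab: "(a,b) \<in> E" shows "K2 a b"
proof (rule ccontr)
  assume nk: "\<not> K2 a b"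
  have allnot: "\<not> K2 s s'" if ss: "(s,s') \<in> E" for s s'
  proof
    assume "K2 s s'"
    obtain g where g: "aut V E g" "g s = a" "g s' = b" using atrans[OF ch dig ss ab] by blast
    have "K2 a b" using K2inv[OF g(1) ss \<open>K2 s s'\<close>] g by simp
    then show False using nk by simp
  qed
  have STEP: "(s,y) \<in> E \<and> y \<in> T x0 s"
    if p: "p < 3" and a: "a \<in> cl x0 p" and y: "y \<in> T x0 a" and s: "s \<in> cl x0 (sc p)" for p a y s
  proof -
    have xa: "(x0,a) \<in> E" and fa: "f x0 a = p" using a by (auto simp: memcl)
    have "s \<in> N x0 \<inter> N a" using L1[OF xa] s fa by simp
    then have "(s,y) \<in> E" using K1prop[OF xa allnot[OF xa] y] by simp
    moreover have "(y,x0) \<in> E" using y by (simp add: Tmem)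
    ultimately show ?thesis by (simp add: Tmem)
  qed
  obtain a1 where a1: "a1 \<in> cl x0 0" using clne[OF x0V] by fastforce
  have xa1: "(x0,a1) \<in> E" using a1 by (simp add: memcl)
  obtain z where z: "(x0,z) \<in> E" "(a1,z) \<in> E" using Sne[OF xa1] by blast
  have a1V: "a1 \<in> V" using Vof xa1 by auto
  obtain y where y: "y \<in> cl a1 (sc (f a1 z))" using clne[OF a1V sc_lt] by blast
  have yT: "y \<in> T x0 a1" using KIND1[OF xa1 allnot[OF xa1] z] y by simp
  obtain s1 where s1: "s1 \<in> cl x0 1" using clne[OF x0V] by fastforce
  obtain s2 where s2: "s2 \<in> cl x0 2" using clne[OF x0V] by fastforce
  have A1: "\<forall>s\<in>cl x0 1. (s,y) \<in> E \<and> y \<in> T x0 s" using STEP[of 0 a1 y] a1 yT sc012 by simp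
  then have yT1: "y \<in> T x0 s1" using s1 by blast
  have A2: "\<forall>s\<in>cl x0 2. (s,y) \<in> E \<and> y \<in> T x0 s" using STEP[of 1 s1 y] s1 yT1 sc012 by simp
  then have yT2: "y \<in> T x0 s2" using s2 by blast
  have A0: "\<forall>s\<in>cl x0 0. (s,y) \<in> E \<and> y \<in> T x0 s" using STEP[of 2 s2 y] s2 yT2 sc012 by simp
  have allin: "(w,y) \<in> E" if "(x0,w) \<in> E" for w
  proof -
    have "w \<in> cl x0 0 \<or> w \<in> cl x0 1 \<or> w \<in> cl x0 2" using B4[OF x0V _ that, of 0] sc012 by simp
    then show ?thesis using A0 A1 A2 by blast
  qed
  have yx: "(y,x0) \<in> E" using yT by (simp add: Tmem)
  obtain w where w: "(y,w) \<in> E" "(x0,w) \<in> E" using Sne[OF yx] by blast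
  show False using allin[OF w(2)] w(1) asy by blast
qed

lemma L2: assumes "(u,w) \<in> E" "(u,z) \<in> E" "(w,z) \<in> E"
  shows "T u w = cl w (sc (sc (f w z)))"
  using KIND2[OF assms(1) K2all[OF assms(1)] assms(2,3)] .

lemma L2c: assumes uw: "(u,w) \<in> E" and z: "(u,z) \<in> E" "(w,z) \<in> E" and a: "(w,a) \<in> E" "f w a = sc (f w z)"
  shows "(u,a) \<notin> E" "(a,u) \<notin> E"
proof -
  have wV: "w \<in> V" using Vof uw by auto
  have fz: "f w z < 3" using B1[OF wV z(2)] .
  show "(u,a) \<notin> E"
  proof
    assume "(u,a) \<in> E"
    then have "a \<in> cl w (f w z)" using L1'[OF uw z] a by auto
    then show False using a sc_ne[OF fz] by (simp add: memcl)
  qed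
  show "(a,u) \<notin> E"
  proof
    assume "(a,u) \<in> E"
    then have "a \<in> T u w" using a by (simp add: Tmem)
    then have "a \<in> cl w (sc (sc (f w z)))" using L2[OF uw z] by simp
    then show False using a sc_ne[OF sc_lt[of "f w z"]] by (simp add: memcl)
  qed
qed

lemma Tcard: assumes ab: "(a,b) \<in> E" shows "card (T a b) = n" "finite (T a b)"
proof -
  obtain z where z: "(a,z) \<in> E" "(b,z) \<in> E" using Sne[OF ab] by blast
  have bV: "b \<in> V" using Vof ab by auto
  show "card (T a b) = n" "finite (T a b)" using L2[OF ab z] B2[OF bV sc_lt] finc[OF bV] by auto
qed

lemma TWaux:
  assumes vV: "v \<in> V" and wV: "w \<in> V" and e: "(v,a) \<in> E" "(v,b) \<in> E" "(w,a) \<in> E" "(w,b) \<in> E"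
    and ab: "(a,b) \<in> E" and ca: "cl v (f v a) = cl w (f w a)" and cb: "cl v (f v b) = cl w (f w b)"
  shows "N v = N w"
proof -
  have fa: "f v a < 3" "f w a < 3" using B1 vV wV e by auto
  have fb: "f v b = sc (f v a)" "f w b = sc (f w a)" using B3[OF vV e(1,2)] B3[OF wV e(3,4)] ab by auto
  have Rv: "cl v (sc (sc (f v a))) = T a b"
    using card_subset_eq[OF Tcard(2)[OF ab] RT[OF e(1,2) ab]] B2[OF vV sc_lt] Tcard(1)[OF ab] by simp
  have Rw: "cl w (sc (sc (f w a))) = T a b"
    using card_subset_eq[OF Tcard(2)[OF ab] RT[OF e(3,4) ab]] B2[OF wV sc_lt] Tcard(1)[OF ab] by simp
  have "N v = cl v (f v a) \<union> cl v (sc (f v a)) \<union> cl v (sc (sc (f v a)))" using B4s[OF vV fa(1)] .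
  also have "\<dots> = cl w (f w a) \<union> cl w (sc (f w a)) \<union> cl w (sc (sc (f w a)))"
    using ca cb fb Rv Rw by simp
  also have "\<dots> = N w" using B4s[OF wV fa(2)] by simp
  finally show ?thesis .
qed

lemma TW:
  assumes uv: "(u,v) \<in> E" and uw: "(u,w) \<in> E" and fe: "f u v = f u w"
  shows "N v = N w"
proof (cases "v = w")
  case False
  have uV: "u \<in> V" and vV: "v \<in> V" and wV: "w \<in> V" using Vof uv uw by auto
  define d where "d = f u v"
  have d3: "d < 3" using B1[OF uV uv] d_def by simp
  have S1: "N u \<inter> N v = cl u (sc d)" using L1[OF uv] d_def by simp
  have S2: "N u \<inter> N w = cl u (sc d)" using L1[OF uw] d_def fe by simp
  obtain p where p: "p \<in> cl u (sc (sc d))" using clne[OF uV sc_lt] by blast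
  have vcl: "v \<in> cl u d" "w \<in> cl u d" using uv uw fe d_def by (auto simp: memcl)
  have pv: "(p,v) \<in> E" "(p,w) \<in> E" using clarc2[OF uV p _ d3] vcl by auto
  have pV: "p \<in> V" using Vof pv by auto
  have nvw: "(v,w) \<notin> E" "(w,v) \<notin> E" using B7[OF uV] vcl by auto
  have fpe: "f p v = f p w" using nonadj_same[OF pV pv nvw] .
  have S1': "N p \<inter> N v = cl p (sc (f p v))" using L1[OF pv(1)] .
  have S2': "N p \<inter> N w = cl p (sc (f p v))" using L1[OF pv(2)] fpe by simp
  obtain s0 where s0: "s0 \<in> cl u (sc d)" using clne[OF uV sc_lt] by blast
  obtain s1 where s1: "s1 \<in> cl p (sc (f p v))" using clne[OF pV sc_lt] by blast
  have s0e: "(u,s0) \<in> E" "(v,s0) \<in> E" "(w,s0) \<in> E" using s0 S1 S2 by auto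
  have s1e: "(p,s1) \<in> E" "(v,s1) \<in> E" "(w,s1) \<in> E" using s1 S1' S2' by auto
  have disj: "x \<notin> N p" if "x \<in> cl u (sc d)" for x
  proof -
    have "(x,p) \<in> E" using clarc[OF uV that p] .
    then show ?thesis using asy by auto
  qed
  have C0v: "cl v (f v s0) = cl u (sc d)" using L1'[OF uv s0e(1,2)] S1 by simp
  have C0w: "cl w (f w s0) = cl u (sc d)" using L1'[OF uw s0e(1,3)] S2 by simp
  have C1v: "cl v (f v s1) = cl p (sc (f p v))" using L1'[OF pv(1) s1e(1,2)] S1' by simp
  have C1w: "cl w (f w s1) = cl p (sc (f p v))" using L1'[OF pv(2) s1e(1,3)] S2' by simp
  have "f v s0 \<noteq> f v s1"
  proof
    assume "f v s0 = f v s1"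
    then have "s1 \<in> cl v (f v s0)" using s1e by (simp add: memcl)
    then have "s1 \<in> cl u (sc d)" using C0v by simp
    then show False using disj s1e(1) by simp
  qed
  then have "(s0,s1) \<in> E \<or> (s1,s0) \<in> E" using nonadj_same[OF vV s0e(2) s1e(2)] by blast
  then show ?thesis
  proof
    assume "(s0,s1) \<in> E"
    then show ?thesis using TWaux[OF vV wV s0e(2) s1e(2) s0e(3) s1e(3)] C0v C0w C1v C1w by simp
  next
    assume "(s1,s0) \<in> E"
    then show ?thesis using TWaux[OF vV wV s1e(2) s0e(2) s1e(3) s0e(3)] C0v C0w C1v C1w by simp
  qed
qed simp

end

context ctx begin

lemma pick_class:
  assumes "w \<in> V" "e < 3" "A \<subseteq> N w" "card A = n" "A \<inter> cl w e = {}" "A \<inter> cl w (sc (sc e)) = {}"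
  shows "A = cl w (sc e)"
proof -
  have "A \<subseteq> cl w (sc e)"
  proof
    fix a assume a: "a \<in> A"
    then have "(w,a) \<in> E" using assms(3) by auto
    then have "a \<in> cl w e \<or> a \<in> cl w (sc e) \<or> a \<in> cl w (sc (sc e))" using B4[OF assms(1,2)] by blast
    then show "a \<in> cl w (sc e)" using a assms(5,6) by blast
  qed
  then show ?thesis using cl_sub_eq[OF assms(1) sc_lt] assms(4) by blast
qed

lemma TWcl: assumes "u \<in> cl p e" "r \<in> cl p e" shows "N u = N r"
  using TW[of p u r] assms by (simp add: memcl)

lemma cl_disj: "c \<noteq> d \<Longrightarrow> cl u c \<inter> cl u d = {}" by (auto simp: memcl)

lemma cardN: assumes "u \<in> V" shows "card (N u) = 3 * n"
proof -
  have d1: "cl u 0 \<inter> cl u 1 = {}" "(cl u 0 \<union> cl u 1) \<inter> cl u 2 = {}"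
    using cl_disj[of 0 2 u] cl_disj[of 1 2 u] cl_disj[of 0 1 u] by auto
  have "card (cl u 0 \<union> cl u 1 \<union> cl u 2) = card (cl u 0) + card (cl u 1) + card (cl u 2)"
    using card_Un_disjoint[OF finite_UnI[OF finc finc] finc d1(2)] card_Un_disjoint[OF finc finc d1(1)]
      assms by simp
  then show ?thesis using B4s[OF assms, of 0] sc012 B2[OF assms] by simp
qed

lemma card3: assumes "finite A" "finite B" "finite C" "card A = n" "card B = n" "card C = n"
  "A \<inter> B = {}" "A \<inter> C = {}" "B \<inter> C = {}" shows "card (A \<union> B \<union> C) = 3 * n"
proof -
  have "(A \<union> B) \<inter> C = {}" using assms by blast
  then show ?thesis using card_Un_disjoint[OF finite_UnI[OF assms(1,2)] assms(3)]
      card_Un_disjoint[OF assms(1,2,7)] assms(4-6) by simp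
qed

definition reach where "reach u = {v. (u,v) \<in> E\<^sup>*}"

lemma struct8:
  "\<exists>C :: nat \<Rightarrow> 'a set. (\<forall>h<8. card (C h) = n \<and> finite (C h) \<and> C h \<subseteq> reach x0)
     \<and> (\<forall>h<8. \<forall>h'<8. h \<noteq> h' \<longrightarrow> C h \<inter> C h' = {}) \<and> x0 \<in> C 0
     \<and> (\<forall>h<8. \<forall>u\<in>C h. N u = \<Union> (C ` {h'. h' < 8 \<and> (h,h') \<in> H_E}))"
proof -
  define I where "I = cl x0 0"
  define K where "K = cl x0 1"
  define J where "J = cl x0 2"
  obtain i0 where i0: "i0 \<in> I" using clne[OF x0V] I_def by fastforce
  obtain k0 where k0: "k0 \<in> K" using clne[OF x0V] K_def by fastforce
  obtain j0 where j0: "j0 \<in> J" using clne[OF x0V] J_def by fastforce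
  have xi: "(x0,i0) \<in> E" "(x0,k0) \<in> E" "(x0,j0) \<in> E" using i0 k0 j0 I_def K_def J_def by (auto simp: memcl)
  have fxi: "f x0 i0 = 0" "f x0 k0 = 1" "f x0 j0 = 2" using i0 k0 j0 I_def K_def J_def by (auto simp: memcl)
  have ik: "(i0,k0) \<in> E" using clarc[OF x0V, of i0 0 k0] i0 k0 I_def K_def sc012 by simp
  have kj: "(k0,j0) \<in> E" using clarc[OF x0V, of k0 1 j0] k0 j0 K_def J_def sc012 by simp
  have ji: "(j0,i0) \<in> E" using clarc[OF x0V, of j0 2 i0] j0 i0 J_def I_def sc012 by simp
  have iV: "i0 \<in> V" "k0 \<in> V" "j0 \<in> V" using Vof xi by auto
  have IN: "I \<subseteq> N x0" "K \<subseteq> N x0" "J \<subseteq> N x0" using I_def K_def J_def by (auto simp: memcl)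
  have IJK: "I \<inter> K = {}" "I \<inter> J = {}" "K \<inter> J = {}" using cl_disj I_def K_def J_def by auto
  have SI: "N x0 \<inter> N i0 = K" using L1[OF xi(1)] fxi sc012 K_def by simp
  have SK: "N x0 \<inter> N k0 = J" using L1[OF xi(2)] fxi sc012 J_def by simp
  have SJ: "N x0 \<inter> N j0 = I" using L1[OF xi(3)] fxi sc012 I_def by simp
  define ca where "ca = f i0 k0"
  define cb where "cb = f k0 j0"
  define cc where "cc = f j0 i0"
  have c3: "ca < 3" "cb < 3" "cc < 3" using B1 iV ik kj ji ca_def cb_def cc_def by auto
  have Kc: "K = cl i0 ca" using L1'[OF xi(1) xi(2) ik] SI ca_def by simp
  have Jc: "J = cl k0 cb" using L1'[OF xi(2) xi(3) kj] SK cb_def by simp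
  have Ic: "I = cl j0 cc" using L1'[OF xi(3) xi(1) ji] SJ cc_def by simp
  define Jb where "Jb = T x0 i0"
  define Ib where "Ib = T x0 k0"
  define Kb where "Kb = T x0 j0"
  have Jbc: "Jb = cl i0 (sc (sc ca))" using L2[OF xi(1) xi(2) ik] Jb_def ca_def by simp
  have Ibc: "Ib = cl k0 (sc (sc cb))" using L2[OF xi(2) xi(3) kj] Ib_def cb_def by simp
  have Kbc: "Kb = cl j0 (sc (sc cc))" using L2[OF xi(3) xi(1) ji] Kb_def cc_def by simp
  have bx: "\<And>y. y \<in> Ib \<Longrightarrow> (y,x0) \<in> E" "\<And>y. y \<in> Jb \<Longrightarrow> (y,x0) \<in> E" "\<And>y. y \<in> Kb \<Longrightarrow> (y,x0) \<in> E"
    using Ib_def Jb_def Kb_def by (auto simp: Tmem)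
  define Z where "Z = N i0 \<inter> N k0"
  have Zc1: "Z = cl i0 (sc ca)" using L1[OF ik] Z_def ca_def by simp
  have Zx: "\<And>z. z \<in> Z \<Longrightarrow> (x0,z) \<notin> E \<and> (z,x0) \<notin> E"
  proof -
    fix z assume "z \<in> Z"
    then have "(i0,z) \<in> E" "f i0 z = sc (f i0 k0)" using Zc1 ca_def by (auto simp: memcl)
    then show "(x0,z) \<notin> E \<and> (z,x0) \<notin> E" using L2c[OF xi(1) xi(2) ik] by blast
  qed
  have ZxN: "Z \<inter> N x0 = {}" "Z \<inter> {y. (y,x0) \<in> E} = {}" using Zx by auto
  have INb: "Ib \<subseteq> {y. (y,x0) \<in> E}" "Jb \<subseteq> {y. (y,x0) \<in> E}" "Kb \<subseteq> {y. (y,x0) \<in> E}" using bx by auto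
  have cardZ: "card Z = n" using Zc1 B2[OF iV(1) sc_lt] by simp
  have Zc2: "Z = cl k0 (sc cb)"
  proof (rule pick_class[OF iV(2) c3(2)])
    show "Z \<subseteq> N k0" "card Z = n" using Z_def cardZ by auto
    show "Z \<inter> cl k0 cb = {}" using Jc IN ZxN by blast
    show "Z \<inter> cl k0 (sc (sc cb)) = {}" using Ibc INb ZxN by blast
  qed
  have Zc3: "Z = cl j0 (sc cc)"
  proof (rule pick_class[OF iV(3) c3(3)])
    have "N k0 \<inter> N j0 = Z" using L1[OF kj] Zc2 cb_def by simp
    then show "Z \<subseteq> N j0" "card Z = n" using cardZ by auto
    show "Z \<inter> cl j0 cc = {}" using Ic IN ZxN by blast
    show "Z \<inter> cl j0 (sc (sc cc)) = {}" using Kbc INb ZxN by blast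
  qed
  obtain ib0 where ib0: "ib0 \<in> Ib" using clne[OF iV(2) sc_lt] Ibc by blast
  obtain jb0 where jb0: "jb0 \<in> Jb" using clne[OF iV(1) sc_lt] Jbc by blast
  obtain kb0 where kb0: "kb0 \<in> Kb" using clne[OF iV(3) sc_lt] Kbc by blast
  obtain z0 where z0: "z0 \<in> Z" using clne[OF iV(1) sc_lt] Zc1 by blast
  have ibx: "(ib0,x0) \<in> E" "(jb0,x0) \<in> E" "(kb0,x0) \<in> E" using bx ib0 jb0 kb0 by auto
  have ibV: "ib0 \<in> V" "jb0 \<in> V" "kb0 \<in> V" using Vof ibx by auto
  have ibJ: "\<And>j. j \<in> J \<Longrightarrow> (ib0,j) \<in> E" using clarc2[OF iV(2) _ _ c3(2)] ib0 Ibc Jc by blast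
  have jbK: "\<And>k. k \<in> K \<Longrightarrow> (jb0,k) \<in> E" using clarc2[OF iV(1) _ _ c3(1)] jb0 Jbc Kc by blast
  have kbI: "\<And>i. i \<in> I \<Longrightarrow> (kb0,i) \<in> E" using clarc2[OF iV(3) _ _ c3(3)] kb0 Kbc Ic by blast
  have ZIb: "\<And>z y. z \<in> Z \<Longrightarrow> y \<in> Ib \<Longrightarrow> (z,y) \<in> E" using clarc[OF iV(2)] Zc2 Ibc by blast
  have ZJb: "\<And>z y. z \<in> Z \<Longrightarrow> y \<in> Jb \<Longrightarrow> (z,y) \<in> E" using clarc[OF iV(1)] Zc1 Jbc by blast
  have ZKb: "\<And>z y. z \<in> Z \<Longrightarrow> y \<in> Kb \<Longrightarrow> (z,y) \<in> E" using clarc[OF iV(3)] Zc3 Kbc by blast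
  define ex where "ex = f ib0 x0"
  have ex3: "ex < 3" using B1[OF ibV(1) ibx(1)] ex_def by simp
  have ibSJ: "N ib0 \<inter> N x0 = J" using L1'[OF ibx(1) ibJ[OF j0] xi(3)] fxi J_def by simp
  have Jc2: "J = cl ib0 (sc ex)" using L1[OF ibx(1)] ibSJ ex_def by simp
  define X where "X = cl ib0 ex"
  have Kbc2: "Kb = cl ib0 (sc (sc ex))"
  proof -
    have fj: "f ib0 j0 = sc ex" using j0 Jc2 by (simp add: memcl)
    have W: "N ib0 \<inter> N j0 = cl ib0 (sc (sc ex))" using L1[OF ibJ[OF j0]] fj by simp
    have "cl ib0 (sc (sc ex)) = cl j0 (sc (sc cc))"
    proof (rule pick_class[OF iV(3) sc_lt])
      show "cl ib0 (sc (sc ex)) \<subseteq> N j0" using W by blast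
      show "card (cl ib0 (sc (sc ex))) = n" using B2[OF ibV(1) sc_lt] .
      show "cl ib0 (sc (sc ex)) \<inter> cl j0 (sc cc) = {}"
      proof -
        have nz: "\<And>z. z \<in> Z \<Longrightarrow> (ib0,z) \<notin> E" using ZIb[OF _ ib0] asy by blast
        { fix y assume y: "y \<in> cl ib0 (sc (sc ex))" "y \<in> cl j0 (sc cc)"
          then have "y \<in> Z" using Zc3 by simp
          moreover have "(ib0,y) \<in> E" using y(1) by (simp add: memcl)
          ultimately have False using nz by blast }
        then show ?thesis by blast
      qed
      show "cl ib0 (sc (sc ex)) \<inter> cl j0 (sc (sc (sc cc))) = {}"
      proof -
        { fix y assume y: "y \<in> cl ib0 (sc (sc ex))" "y \<in> cl j0 (sc (sc (sc cc)))"
          then have yX: "y \<in> I" using Ic sc3[OF c3(3)] by simp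
          then have "(x0,y) \<in> E" using IN(1) by auto
          moreover have "(ib0,y) \<in> E" using y(1) by (simp add: memcl)
          ultimately have "y \<in> N ib0 \<inter> N x0" by simp
          then have "y \<in> J" using ibSJ by simp
          then have False using yX IJK(2) by blast }
        then show ?thesis by blast
      qed
    qed
    then show ?thesis using Kbc by simp
  qed
  define ex' where "ex' = f jb0 x0"
  have ex3': "ex' < 3" using B1[OF ibV(2) ibx(2)] ex'_def by simp
  have jbSK: "N jb0 \<inter> N x0 = K" using L1'[OF ibx(2) jbK[OF k0] xi(2)] fxi K_def by simp
  have Kc2: "K = cl jb0 (sc ex')" using L1[OF ibx(2)] jbSK ex'_def by simp
  have Ibc2: "Ib = cl jb0 (sc (sc ex'))"
  proof -
    have fk: "f jb0 k0 = sc ex'" using k0 Kc2 by (simp add: memcl)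
    have W: "N jb0 \<inter> N k0 = cl jb0 (sc (sc ex'))" using L1[OF jbK[OF k0]] fk by simp
    have "cl jb0 (sc (sc ex')) = cl k0 (sc (sc cb))"
    proof (rule pick_class[OF iV(2) sc_lt])
      show "cl jb0 (sc (sc ex')) \<subseteq> N k0" using W by blast
      show "card (cl jb0 (sc (sc ex'))) = n" using B2[OF ibV(2) sc_lt] .
      show "cl jb0 (sc (sc ex')) \<inter> cl k0 (sc cb) = {}"
      proof -
        have nz: "\<And>z. z \<in> Z \<Longrightarrow> (jb0,z) \<notin> E" using ZJb[OF _ jb0] asy by blast
        { fix y assume y: "y \<in> cl jb0 (sc (sc ex'))" "y \<in> cl k0 (sc cb)"
          then have "y \<in> Z" using Zc2 by simp
          moreover have "(jb0,y) \<in> E" using y(1) by (simp add: memcl)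
          ultimately have False using nz by blast }
        then show ?thesis by blast
      qed
      show "cl jb0 (sc (sc ex')) \<inter> cl k0 (sc (sc (sc cb))) = {}"
      proof -
        { fix y assume y: "y \<in> cl jb0 (sc (sc ex'))" "y \<in> cl k0 (sc (sc (sc cb)))"
          then have yX: "y \<in> J" using Jc sc3[OF c3(2)] by simp
          then have "(x0,y) \<in> E" using IN(3) by auto
          moreover have "(jb0,y) \<in> E" using y(1) by (simp add: memcl)
          ultimately have "y \<in> N jb0 \<inter> N x0" by simp
          then have "y \<in> K" using jbSK by simp
          then have False using yX IJK(3) by blast }
        then show ?thesis by blast
      qed
    qed
    then show ?thesis using Ibc by simp
  qed
  have jbib: "(jb0,ib0) \<in> E" "f jb0 ib0 = sc (sc ex')" using ib0 Ibc2 by (auto simp: memcl)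
  have Xeq1: "cl jb0 ex' = X"
  proof -
    have "N jb0 \<inter> N ib0 = cl jb0 ex'" using L1[OF jbib(1)] jbib(2) sc3[OF ex3'] by simp
    moreover have "N jb0 \<inter> N ib0 = cl ib0 (f ib0 x0)" using L1'[OF jbib(1) ibx(2) ibx(1)] .
    ultimately show ?thesis using X_def ex_def by simp
  qed
  define ex'' where "ex'' = f kb0 x0"
  have ex3'': "ex'' < 3" using B1[OF ibV(3) ibx(3)] ex''_def by simp
  have kbSI: "N kb0 \<inter> N x0 = I" using L1'[OF ibx(3) kbI[OF i0] xi(1)] fxi I_def by simp
  have Ic2: "I = cl kb0 (sc ex'')" using L1[OF ibx(3)] kbSI ex''_def by simp
  have Jbc2: "Jb = cl kb0 (sc (sc ex''))"
  proof -
    have fi: "f kb0 i0 = sc ex''" using i0 Ic2 by (simp add: memcl)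
    have W: "N kb0 \<inter> N i0 = cl kb0 (sc (sc ex''))" using L1[OF kbI[OF i0]] fi by simp
    have "cl kb0 (sc (sc ex'')) = cl i0 (sc (sc ca))"
    proof (rule pick_class[OF iV(1) sc_lt])
      show "cl kb0 (sc (sc ex'')) \<subseteq> N i0" using W by blast
      show "card (cl kb0 (sc (sc ex''))) = n" using B2[OF ibV(3) sc_lt] .
      show "cl kb0 (sc (sc ex'')) \<inter> cl i0 (sc ca) = {}"
      proof -
        have nz: "\<And>z. z \<in> Z \<Longrightarrow> (kb0,z) \<notin> E" using ZKb[OF _ kb0] asy by blast
        { fix y assume y: "y \<in> cl kb0 (sc (sc ex''))" "y \<in> cl i0 (sc ca)"
          then have "y \<in> Z" using Zc1 by simp
          moreover have "(kb0,y) \<in> E" using y(1) by (simp add: memcl)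
          ultimately have False using nz by blast }
        then show ?thesis by blast
      qed
      show "cl kb0 (sc (sc ex'')) \<inter> cl i0 (sc (sc (sc ca))) = {}"
      proof -
        { fix y assume y: "y \<in> cl kb0 (sc (sc ex''))" "y \<in> cl i0 (sc (sc (sc ca)))"
          then have yX: "y \<in> K" using Kc sc3[OF c3(1)] by simp
          then have "(x0,y) \<in> E" using IN(2) by auto
          moreover have "(kb0,y) \<in> E" using y(1) by (simp add: memcl)
          ultimately have "y \<in> N kb0 \<inter> N x0" by simp
          then have "y \<in> I" using kbSI by simp
          then have False using yX IJK(1) by blast }
        then show ?thesis by blast
      qed
    qed
    then show ?thesis using Jbc by simp
  qed
  have kbjb: "(kb0,jb0) \<in> E" "f kb0 jb0 = sc (sc ex'')" using jb0 Jbc2 by (auto simp: memcl)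
  have Xeq2: "cl kb0 ex'' = X"
  proof -
    have "N kb0 \<inter> N jb0 = cl kb0 ex''" using L1[OF kbjb(1)] kbjb(2) sc3[OF ex3''] by simp
    moreover have "N kb0 \<inter> N jb0 = cl jb0 (f jb0 x0)" using L1'[OF kbjb(1) ibx(3) ibx(2)] .
    ultimately show ?thesis using Xeq1 ex'_def by simp
  qed
  have x0X: "x0 \<in> X" using X_def ex_def ibx(1) by (simp add: memcl)
  define C :: "nat \<Rightarrow> 'a set" where "C h = (if h = 0 then X else if h = 1 then Z else if h = 2 then I else if h = 3 then Ib
     else if h = 4 then J else if h = 5 then Jb else if h = 6 then K else Kb)" for h
  have C0: "C 0 = X" "C 1 = Z" "C 2 = I" "C 3 = Ib" "C 4 = J" "C 5 = Jb" "C 6 = K" "C 7 = Kb"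
    by (simp_all add: C_def)
  have NX: "N x0 = I \<union> K \<union> J" using B4s[OF x0V, of 0] sc012 I_def K_def J_def by simp
  have Ni: "N i0 = K \<union> Z \<union> Jb" using B4s[OF iV(1) c3(1)] Kc Zc1 Jbc by simp
  have Nk: "N k0 = J \<union> Z \<union> Ib" using B4s[OF iV(2) c3(2)] Jc Zc2 Ibc by simp
  have Nj: "N j0 = I \<union> Z \<union> Kb" using B4s[OF iV(3) c3(3)] Ic Zc3 Kbc by simp
  have Nib: "N ib0 = X \<union> J \<union> Kb" using B4s[OF ibV(1) ex3] X_def Jc2 Kbc2 by simp
  have Njb: "N jb0 = X \<union> K \<union> Ib" using B4s[OF ibV(2) ex3'] Xeq1 Kc2 Ibc2 by simp
  have Nkb: "N kb0 = X \<union> I \<union> Jb" using B4s[OF ibV(3) ex3''] Xeq2 Ic2 Jbc2 by simp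
  have bdisj: "Ib \<inter> Jb = {}" "Ib \<inter> Kb = {}" "Jb \<inter> Kb = {}"
  proof -
    have "N k0 \<inter> N i0 = Z" "N k0 \<inter> N j0 = Z" "N i0 \<inter> N j0 = Z"
      using Z_def L1[OF kj] Zc2 cb_def L1[OF ji] Zc3 cc_def by auto
    moreover have "Ib \<subseteq> N k0" "Jb \<subseteq> N i0" "Kb \<subseteq> N j0" using Nk Ni Nj by auto
    ultimately show "Ib \<inter> Jb = {}" "Ib \<inter> Kb = {}" "Jb \<inter> Kb = {}" using INb ZxN by blast+
  qed
  have fins: "finite X" "finite Z" "finite I" "finite J" "finite K" "finite Ib" "finite Jb" "finite Kb"
    using finc x0V iV ibV X_def Zc1 I_def J_def K_def Ibc Jbc Kbc by auto
  have cards: "card X = n" "card Z = n" "card I = n" "card J = n" "card K = n" "card Ib = n"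
    "card Jb = n" "card Kb = n"
    using B2 sc_lt x0V iV ibV X_def ex3 Zc1 I_def J_def K_def Ibc Jbc Kbc c3 by auto
  have Nz: "N z0 = Jb \<union> Ib \<union> Kb"
  proof -
    have sub: "Jb \<union> Ib \<union> Kb \<subseteq> N z0" using ZIb ZJb ZKb z0 by auto
    have z0V: "z0 \<in> V" using Zc1 z0 Vof by (auto simp: memcl)
    have "card (Jb \<union> Ib \<union> Kb) = 3 * n"
      using card3[OF fins(7) fins(6) fins(8) cards(7) cards(6) cards(8)] bdisj by blast
    then show ?thesis using card_subset_eq[OF finN[OF z0V] sub] cardN[OF z0V] by simp
  qed
  have twX: "\<And>u. u \<in> X \<Longrightarrow> N u = N x0" using TWcl x0X X_def by blast
  have twZ: "\<And>u. u \<in> Z \<Longrightarrow> N u = N z0" using TWcl z0 Zc1 by blast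
  have twI: "\<And>u. u \<in> I \<Longrightarrow> N u = N i0" using TWcl i0 I_def by blast
  have twJ: "\<And>u. u \<in> J \<Longrightarrow> N u = N j0" using TWcl j0 J_def by blast
  have twK: "\<And>u. u \<in> K \<Longrightarrow> N u = N k0" using TWcl k0 K_def by blast
  have twIb: "\<And>u. u \<in> Ib \<Longrightarrow> N u = N ib0" using TWcl ib0 Ibc by blast
  have twJb: "\<And>u. u \<in> Jb \<Longrightarrow> N u = N jb0" using TWcl jb0 Jbc by blast
  have twKb: "\<And>u. u \<in> Kb \<Longrightarrow> N u = N kb0" using TWcl kb0 Kbc by blast
  have XN: "\<And>u. u \<in> X \<Longrightarrow> (x0,u) \<notin> E \<and> (u,x0) \<notin> E"
  proof -
    fix u assume u: "u \<in> X"
    have "(x0,u) \<notin> E"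
    proof
      assume "(x0,u) \<in> E" then have "u \<in> N u" using twX[OF u] by simp
      then show False using irr by simp
    qed
    moreover have "(u,x0) \<notin> E"
    proof
      assume "(u,x0) \<in> E" then have "x0 \<in> N x0" using twX[OF u] by (metis N_iff)
      then show False using irr by simp
    qed
    ultimately show "(x0,u) \<notin> E \<and> (u,x0) \<notin> E" by simp
  qed
  have XZ: "X \<inter> Z = {}"
  proof -
    { fix u assume u: "u \<in> X" "u \<in> Z"
      have "(u,i0) \<in> E" using twX[OF u(1)] xi(1) by (metis N_iff)
      moreover have "(i0,u) \<in> E" using u(2) Z_def by simp
      ultimately have False using asy by blast }
    then show ?thesis by blast
  qed
  have NxNm: "N x0 \<inter> {y. (y,x0) \<in> E} = {}" using asy by auto
  have disj: "\<forall>h<8. \<forall>h'<8. h \<noteq> h' \<longrightarrow> C h \<inter> C h' = {}"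
  proof -
    have A: "X \<inter> N x0 = {}" "X \<inter> {y. (y,x0) \<in> E} = {}" "Z \<inter> N x0 = {}" "Z \<inter> {y. (y,x0) \<in> E} = {}"
      using XN Zx by auto
    have D0: "X \<inter> Z = {}" using XZ by blast
    have D1: "X \<inter> I = {}" using A(1) IN(1) by blast
    have D2: "X \<inter> Ib = {}" using A(2) INb(1) by blast
    have D3: "X \<inter> J = {}" using A(1) IN(3) by blast
    have D4: "X \<inter> Jb = {}" using A(2) INb(2) by blast
    have D5: "X \<inter> K = {}" using A(1) IN(2) by blast
    have D6: "X \<inter> Kb = {}" using A(2) INb(3) by blast
    have D7: "Z \<inter> I = {}" using ZxN(1) IN(1) by blast
    have D8: "Z \<inter> Ib = {}" using ZxN(2) INb(1) by blast
    have D9: "Z \<inter> J = {}" using ZxN(1) IN(3) by blast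
    have D10: "Z \<inter> Jb = {}" using ZxN(2) INb(2) by blast
    have D11: "Z \<inter> K = {}" using ZxN(1) IN(2) by blast
    have D12: "Z \<inter> Kb = {}" using ZxN(2) INb(3) by blast
    have D13: "I \<inter> Ib = {}" using NxNm IN(1) INb(1) by blast
    have D14: "I \<inter> J = {}" using IJK by blast
    have D15: "I \<inter> Jb = {}" using NxNm IN(1) INb(2) by blast
    have D16: "I \<inter> K = {}" using IJK by blast
    have D17: "I \<inter> Kb = {}" using NxNm IN(1) INb(3) by blast
    have D18: "Ib \<inter> J = {}" using NxNm INb(1) IN(3) by blast
    have D19: "Ib \<inter> Jb = {}" using bdisj by blast
    have D20: "Ib \<inter> K = {}" using NxNm INb(1) IN(2) by blast
    have D21: "Ib \<inter> Kb = {}" using bdisj by blast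
    have D22: "J \<inter> Jb = {}" using NxNm IN(3) INb(2) by blast
    have D23: "J \<inter> K = {}" using IJK by blast
    have D24: "J \<inter> Kb = {}" using NxNm IN(3) INb(3) by blast
    have D25: "Jb \<inter> K = {}" using NxNm INb(2) IN(2) by blast
    have D26: "Jb \<inter> Kb = {}" using bdisj by blast
    have D27: "K \<inter> Kb = {}" using NxNm IN(2) INb(3) by blast
    note D = D0 D1 D2 D3 D4 D5 D6 D7 D8 D9 D10 D11 D12 D13 D14 D15 D16 D17 D18 D19 D20 D21 D22 D23 D24 D25 D26 D27
    have S: "C h \<inter> C h' = {}" if "h < h'" "h' < 8" for h h'
    proof -
      have "h' = 1 \<and> h = 0 \<or> h' = 2 \<and> h < 2 \<or> h' = 3 \<and> h < 3 \<or> h' = 4 \<and> h < 4 \<or> h' = 5 \<and> h < 5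
         \<or> h' = 6 \<and> h < 6 \<or> h' = 7 \<and> h < 7" using that by linarith
      then show ?thesis
      proof (elim disjE conjE)
        assume "h' = 1" "h = 0" then show ?thesis using C0 D by simp
      next
        assume "h' = 2" "h < 2" then have "h = 0 \<or> h = 1" by linarith
        then show ?thesis using C0 D \<open>h' = 2\<close> by (elim disjE) simp_all
      next
        assume "h' = 3" "h < 3" then have "h = 0 \<or> h = 1 \<or> h = 2" by linarith
        then show ?thesis using C0 D \<open>h' = 3\<close> by (elim disjE) simp_all
      next
        assume "h' = 4" "h < 4" then have "h = 0 \<or> h = 1 \<or> h = 2 \<or> h = 3" by linarith
        then show ?thesis using C0 D \<open>h' = 4\<close> by (elim disjE) simp_all
      next
        assume "h' = 5" "h < 5" then have "h = 0 \<or> h = 1 \<or> h = 2 \<or> h = 3 \<or> h = 4" by linarith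
        then show ?thesis using C0 D \<open>h' = 5\<close> by (elim disjE) simp_all
      next
        assume "h' = 6" "h < 6" then have "h = 0 \<or> h = 1 \<or> h = 2 \<or> h = 3 \<or> h = 4 \<or> h = 5" by linarith
        then show ?thesis using C0 D \<open>h' = 6\<close> by (elim disjE) simp_all
      next
        assume "h' = 7" "h < 7" then have "h = 0 \<or> h = 1 \<or> h = 2 \<or> h = 3 \<or> h = 4 \<or> h = 5 \<or> h = 6" by linarith
        then show ?thesis using C0 D \<open>h' = 7\<close> by (elim disjE) simp_all
      qed
    qed
    show ?thesis
    proof (intro allI impI)
      fix h h' :: nat assume "h < 8" "h' < 8" "h \<noteq> h'"
      then consider "h < h'" | "h' < h" by linarith
      then show "C h \<inter> C h' = {}"
      proof cases
        case 1 then show ?thesis using S[of h h'] \<open>h' < 8\<close> by simp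
      next
        case 2 then have "C h' \<inter> C h = {}" using S[of h' h] \<open>h < 8\<close> by simp
        then show ?thesis by (simp add: Int_commute)
      qed
    qed
  qed
  have outs: "{h'. h' < 8 \<and> (0,h') \<in> H_E} = {2,4,6}" "{h'. h' < 8 \<and> (1,h') \<in> H_E} = {3,5,7}"
    "{h'. h' < 8 \<and> (2,h') \<in> H_E} = {1,5,6}" "{h'. h' < 8 \<and> (3,h') \<in> H_E} = {0,4,7}"
    "{h'. h' < 8 \<and> (4,h') \<in> H_E} = {1,2,7}" "{h'. h' < 8 \<and> (5,h') \<in> H_E} = {0,3,6}"
    "{h'. h' < 8 \<and> (6,h') \<in> H_E} = {1,3,4}" "{h'. h' < 8 \<and> (7,h') \<in> H_E} = {0,2,5}"
    by (auto simp: H_E_def)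
  have outN: "\<forall>h<8. \<forall>u\<in>C h. N u = \<Union> (C ` {h'. h' < 8 \<and> (h,h') \<in> H_E})"
  proof (intro allI impI ballI)
    fix h u assume h: "h < 8" and u: "u \<in> C h"
    have "h = 0 \<or> h = 1 \<or> h = 2 \<or> h = 3 \<or> h = 4 \<or> h = 5 \<or> h = 6 \<or> h = 7" using h by auto
    then show "N u = \<Union> (C ` {h'. h' < 8 \<and> (h,h') \<in> H_E})"
    proof (elim disjE)
      assume "h = 0" then show ?thesis using u C0 outs twX NX by auto
    next
      assume "h = 1" then show ?thesis using u C0 outs twZ Nz by auto
    next
      assume "h = 2" then show ?thesis using u C0 outs twI Ni by auto
    next
      assume "h = 3" then show ?thesis using u C0 outs twIb Nib by auto
    next
      assume "h = 4" then show ?thesis using u C0 outs twJ Nj by auto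
    next
      assume "h = 5" then show ?thesis using u C0 outs twJb Njb by auto
    next
      assume "h = 6" then show ?thesis using u C0 outs twK Nk by auto
    next
      assume "h = 7" then show ?thesis using u C0 outs twKb Nkb by auto
    qed
  qed
  have r1: "\<And>v. (x0,v) \<in> E \<Longrightarrow> v \<in> reach x0" by (auto simp: reach_def)
  have rstep: "\<And>a v. a \<in> reach x0 \<Longrightarrow> (a,v) \<in> E \<Longrightarrow> v \<in> reach x0"
    by (auto simp: reach_def intro: rtrancl_into_rtrancl)
  have RI: "I \<subseteq> reach x0" "K \<subseteq> reach x0" "J \<subseteq> reach x0" using IN r1 by auto
  have Ri: "i0 \<in> reach x0" "k0 \<in> reach x0" "j0 \<in> reach x0" using RI i0 k0 j0 by auto
  have Nr: "\<And>a. a \<in> reach x0 \<Longrightarrow> N a \<subseteq> reach x0" using rstep by auto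
  have RZ: "Z \<subseteq> reach x0" "Jb \<subseteq> reach x0" "Ib \<subseteq> reach x0" "Kb \<subseteq> reach x0"
    using Nr[OF Ri(1)] Nr[OF Ri(2)] Nr[OF Ri(3)] Ni Nk Nj by auto
  have "ib0 \<in> reach x0" using RZ(3) ib0 by blast
  then have RX: "X \<subseteq> reach x0" using Nr Nib by blast
  have reachC: "\<forall>h<8. C h \<subseteq> reach x0"
  proof (intro allI impI)
    fix h :: nat assume "h < 8"
    then have "h = 0 \<or> h = 1 \<or> h = 2 \<or> h = 3 \<or> h = 4 \<or> h = 5 \<or> h = 6 \<or> h = 7" by auto
    then show "C h \<subseteq> reach x0" using C0 RI RZ RX by (elim disjE) simp_all
  qed
  have cardC: "\<forall>h<8. card (C h) = n \<and> finite (C h)"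
  proof (intro allI impI)
    fix h :: nat assume "h < 8"
    then have "h = 0 \<or> h = 1 \<or> h = 2 \<or> h = 3 \<or> h = 4 \<or> h = 5 \<or> h = 6 \<or> h = 7" by auto
    then show "card (C h) = n \<and> finite (C h)" using C0 cards fins by (elim disjE) simp_all
  qed
  show ?thesis using cardC reachC disj outN x0X C0 by blast
qed

end


lemma FIN:
  fixes C :: "nat \<Rightarrow> 'a set"
  assumes V: "V = (\<Union>h\<in>{..<8}. C h)" and cd: "\<forall>h<8. card (C h) = n \<and> finite (C h)"
    and dj: "\<forall>h<8. \<forall>h'<8. h \<noteq> h' \<longrightarrow> C h \<inter> C h' = {}"
    and ad: "\<forall>h<8. \<forall>u\<in>C h. \<forall>v. (u,v) \<in> E \<longleftrightarrow> (\<exists>h'<8. (h,h') \<in> H_E \<and> v \<in> C h')"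
  shows "dg_isomorphic V E (lex_V H_V (Kbar_V n)) (lex_E H_V H_E (Kbar_V n) Kbar_E)"
proof -
  define \<beta> where "\<beta> h = (SOME b. bij_betw b (C h) {..<n})" for h
  have bb: "bij_betw (\<beta> h) (C h) {..<n}" if "h < 8" for h
  proof -
    have "\<exists>b. bij_betw b (C h) {..<n}" using finite_same_card_bij[of "C h" "{..<n}"] cd that by simp
    then show ?thesis unfolding \<beta>_def by (rule someI_ex)
  qed
  define lab where "lab v = (SOME h. h < 8 \<and> v \<in> C h)" for v
  have labV: "lab v < 8 \<and> v \<in> C (lab v)" if "v \<in> V" for v
  proof -
    have "\<exists>h. h < 8 \<and> v \<in> C h" using that V by auto
    then show ?thesis unfolding lab_def by (rule someI_ex)
  qed
  have labU: "lab v = h" if "h < 8" "v \<in> C h" for v h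
  proof (rule ccontr)
    assume "lab v \<noteq> h"
    moreover have "v \<in> V" using V that by auto
    ultimately show False using labV[of v] dj that by blast
  qed
  define \<phi> where "\<phi> v = (lab v, \<beta> (lab v) v)" for v
  have HV: "H_V = {..<8}" by (simp add: H_V_def)
  have inj: "inj_on \<phi> V"
  proof (rule inj_onI)
    fix v w assume v: "v \<in> V" and w: "w \<in> V" and e: "\<phi> v = \<phi> w"
    then have l: "lab v = lab w" and b: "\<beta> (lab v) v = \<beta> (lab v) w" by (auto simp: \<phi>_def)
    have "v \<in> C (lab v)" "w \<in> C (lab v)" "lab v < 8" using labV[OF v] labV[OF w] l by auto
    then show "v = w" using bb[of "lab v"] b unfolding bij_betw_def inj_on_def by blast
  qed
  have img: "\<phi> ` V = H_V \<times> {..<n}"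
  proof
    show "\<phi> ` V \<subseteq> H_V \<times> {..<n}"
    proof
      fix p assume "p \<in> \<phi> ` V"
      then obtain v where v: "v \<in> V" "p = \<phi> v" by blast
      have "\<beta> (lab v) v \<in> {..<n}" using bb[of "lab v"] labV[OF v(1)] bij_betwE by blast
      then show "p \<in> H_V \<times> {..<n}" using v labV[OF v(1)] by (auto simp: \<phi>_def HV)
    qed
    show "H_V \<times> {..<n} \<subseteq> \<phi> ` V"
    proof
      fix p assume "p \<in> H_V \<times> {..<n}"
      then obtain h i where p: "p = (h,i)" "h < 8" "i < n" using HV by auto
      then obtain v where v: "v \<in> C h" "\<beta> h v = i" using bb[of h] unfolding bij_betw_def
        by (metis imageE lessThan_iff)
      have "v \<in> V" using V v p by auto
      moreover have "\<phi> v = p" using labU[OF p(2) v(1)] v p by (simp add: \<phi>_def)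
      ultimately show "p \<in> \<phi> ` V" by blast
    qed
  qed
  have edge: "(u,v) \<in> E \<longleftrightarrow> (\<phi> u, \<phi> v) \<in> lex_E H_V H_E (Kbar_V n) Kbar_E" if uv: "u \<in> V" "v \<in> V" for u v
  proof -
    have lu: "lab u < 8" "u \<in> C (lab u)" and lv: "lab v < 8" "v \<in> C (lab v)" using labV uv by auto
    have "(u,v) \<in> E \<longleftrightarrow> (\<exists>h'<8. (lab u,h') \<in> H_E \<and> v \<in> C h')" using ad lu by blast
    also have "\<dots> \<longleftrightarrow> (lab u, lab v) \<in> H_E" using labU lv by blast
    also have "\<dots> \<longleftrightarrow> (\<phi> u, \<phi> v) \<in> lex_E H_V H_E (Kbar_V n) Kbar_E"
    proof -
      have "\<beta> (lab u) u < n" "\<beta> (lab v) v < n" using bb lu lv bij_betwE by fastforce+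
      then show ?thesis using lu lv by (simp add: \<phi>_def lex_E_def HV Kbar_V_def Kbar_E_def)
    qed
    finally show ?thesis .
  qed
  have "bij_betw \<phi> V (lex_V H_V (Kbar_V n))" using inj img by (simp add: bij_betw_def lex_V_def Kbar_V_def)
  then show ?thesis unfolding dg_isomorphic_def dg_iso_def using edge by blast
qed

context ctx begin

lemma reach_aut: assumes g: "aut V E g" and a: "a \<in> V" and v: "v \<in> reach a" shows "g v \<in> reach (g a)"
proof -
  have "(a,v) \<in> E\<^sup>*" using v by (simp add: reach_def)
  then have "(g a, g v) \<in> E\<^sup>*"
  proof (induction rule: rtrancl_induct)
    case base then show ?case by simp
  next
    case (step b c)
    have "b \<in> V" "c \<in> V" using Vof step(2) by auto
    then have "(g b, g c) \<in> E" using aut_edge[OF g] step(2) by simp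
    with step(3) show ?case by (rule rtrancl_into_rtrancl)
  qed
  then show ?thesis by (simp add: reach_def)
qed

lemma reach_V: assumes a: "a \<in> V" shows "reach a \<subseteq> V"
proof
  fix v assume "v \<in> reach a"
  then have "(a,v) \<in> E\<^sup>*" by (simp add: reach_def)
  then show "v \<in> V"
  proof (induction rule: rtrancl_induct)
    case base then show ?case using a .
  next
    case (step b c) then show ?case using Vof by blast
  qed
qed

lemma cover: assumes conn: "dg_connected V E"
  shows "dg_isomorphic V E (lex_V H_V (Kbar_V n)) (lex_E H_V H_E (Kbar_V n) Kbar_E)"
proof -
  from struct8 obtain C :: "nat \<Rightarrow> 'a set" where H: "(\<forall>h<8. card (C h) = n \<and> finite (C h) \<and> C h \<subseteq> reach x0)
     \<and> (\<forall>h<8. \<forall>h'<8. h \<noteq> h' \<longrightarrow> C h \<inter> C h' = {}) \<and> x0 \<in> C 0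
     \<and> (\<forall>h<8. \<forall>u\<in>C h. N u = \<Union> (C ` {h'. h' < 8 \<and> (h,h') \<in> H_E}))" by (rule exE)
  have cd: "\<forall>h<8. card (C h) = n \<and> finite (C h) \<and> C h \<subseteq> reach x0" using H by (rule conjunct1)
  have dj: "\<forall>h<8. \<forall>h'<8. h \<noteq> h' \<longrightarrow> C h \<inter> C h' = {}" using H by (elim conjE)
  have x0C: "x0 \<in> C 0" using H by (elim conjE)
  have outN: "\<forall>h<8. \<forall>u\<in>C h. N u = \<Union> (C ` {h'. h' < 8 \<and> (h,h') \<in> H_E})" using H by (elim conjE)
  define W where "W = (\<Union>h\<in>{..<8}. C h)"
  have Wsub: "W \<subseteq> reach x0" unfolding W_def using cd by blast
  have Wout: "v \<in> W" if uW: "u \<in> W" and uv: "(u,v) \<in> E" for u v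
  proof -
    obtain h where h: "h < 8" "u \<in> C h" using uW unfolding W_def by blast
    have Nu: "N u = \<Union> (C ` {h'. h' < 8 \<and> (h,h') \<in> H_E})" using outN h(1) h(2) by blast
    have "v \<in> N u" using uv by simp
    then have "v \<in> \<Union> (C ` {h'. h' < 8 \<and> (h,h') \<in> H_E})" using Nu by simp
    then obtain h' where "h' < 8" "v \<in> C h'" by blast
    then show ?thesis unfolding W_def by blast
  qed
  have Wr: "reach x0 \<subseteq> W"
  proof
    fix v assume "v \<in> reach x0"
    then have "(x0,v) \<in> E\<^sup>*" by (simp add: reach_def)
    then show "v \<in> W"
    proof (induction rule: rtrancl_induct)
      case base have "(0::nat) \<in> {..<8}" by simp
        then show ?case using x0C unfolding W_def by blast
    next
      case (step b c) then show ?case using Wout[OF step(3) step(2)] by simp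
    qed
  qed
  have WR: "W = reach x0" using Wsub Wr by blast
  have finW: "finite W" unfolding W_def using cd by (intro finite_UN_I) auto
  have cardW: "card W = 8 * n"
  proof -
    have "card W = (\<Sum>h\<in>{..<8}. card (C h))"
      unfolding W_def by (rule card_UN_disjoint) (use cd dj in auto)
    also have "\<dots> = (\<Sum>h\<in>{..<8::nat}. n)" using cd by simp
    finally show ?thesis by simp
  qed
  have rc: "finite (reach u) \<and> card (reach u) = 8 * n" if u: "u \<in> V" for u
  proof -
    obtain g where g: "aut V E g" "g u = x0" using vtrans[OF ch dig u x0V] by blast
    obtain h where h: "aut V E h" "h x0 = u" using vtrans[OF ch dig x0V u] by blast
    have s1: "g ` reach u \<subseteq> W" using reach_aut[OF g(1) u] g(2) WR by auto
    have injg: "inj_on g (reach u)" using aut_inj[OF g(1)] reach_V[OF u] inj_on_subset by blast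
    have fin: "finite (reach u)" using finite_subset[OF s1 finW] injg finite_imageD by blast
    have c1: "card (reach u) \<le> card W" using card_inj_on_le[OF injg s1 finW] .
    have s2: "h ` W \<subseteq> reach u" using reach_aut[OF h(1) x0V] h(2) WR by auto
    have injh: "inj_on h W" using aut_inj[OF h(1)] reach_V[OF x0V] WR inj_on_subset by blast
    have c2: "card W \<le> card (reach u)" using card_inj_on_le[OF injh s2 fin] .
    show ?thesis using fin c1 c2 cardW by simp
  qed
  have Win: "u \<in> W" if uv: "(u,v) \<in> E" and v: "v \<in> W" for u v
  proof -
    have uV: "u \<in> V" and vV: "v \<in> V" using Vof uv by auto
    have sub: "reach v \<subseteq> reach u" using uv unfolding reach_def
      by (auto intro: converse_rtrancl_into_rtrancl)
    have "reach v = reach u" using card_subset_eq[OF conjunct1[OF rc[OF uV]] sub] rc[OF uV] rc[OF vV] by simp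
    moreover have "u \<in> reach u" by (simp add: reach_def)
    moreover have "reach v \<subseteq> reach x0" using v WR unfolding reach_def by (auto intro: rtrancl_trans)
    ultimately show ?thesis using WR by blast
  qed
  have VW: "V \<subseteq> W"
  proof
    fix v assume v: "v \<in> V"
    have "(x0,v) \<in> (E \<union> E\<inverse>)\<^sup>*" using conn x0V v unfolding dg_connected_def by blast
    then show "v \<in> W"
    proof (induction rule: rtrancl_induct)
      case base have "(0::nat) \<in> {..<8}" by simp
        then show ?case using x0C unfolding W_def by blast
    next
      case (step b c)
      from step(2) show ?case
      proof
        assume "(b,c) \<in> E" then show ?thesis using Wout[OF step(3)] by simp
      next
        assume "(b,c) \<in> E\<inverse>" then have "(c,b) \<in> E" by simp
        then show ?thesis using Win step(3) by simp
      qed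
    qed
  qed
  have WV: "W \<subseteq> V" using WR reach_V[OF x0V] by simp
  have ad: "\<forall>h<8. \<forall>u\<in>C h. \<forall>v. (u,v) \<in> E \<longleftrightarrow> (\<exists>h'<8. (h,h') \<in> H_E \<and> v \<in> C h')"
  proof (intro allI impI ballI)
    fix h u v assume "h < 8" "u \<in> C h"
    then have "N u = \<Union> (C ` {h'. h' < 8 \<and> (h,h') \<in> H_E})" using outN by blast
    then have "(u,v) \<in> E \<longleftrightarrow> v \<in> \<Union> (C ` {h'. h' < 8 \<and> (h,h') \<in> H_E})" by (metis N_iff)
    then show "(u,v) \<in> E \<longleftrightarrow> (\<exists>h'<8. (h,h') \<in> H_E \<and> v \<in> C h')" by blast
  qed
  have VeqW: "V = (\<Union>h\<in>{..<8}. C h)" using VW WV unfolding W_def by blast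
  have cd': "\<forall>h<8. card (C h) = n \<and> finite (C h)" using cd by blast
  show ?thesis using FIN[OF VeqW cd' dj ad] .
qed

end


lemma main_out:
  assumes "is_digraph V E" "dg_connected V E" "C_homogeneous V E" "x \<in> V" "n \<ge> 1"
    "c3k E (out_nbhd E x) n"
  shows "dg_isomorphic V E (lex_V H_V (Kbar_V n)) (lex_E H_V H_E (Kbar_V n) Kbar_E)"
proof -
  interpret ctx V E n x using assms by (unfold_locales) auto
  show ?thesis using cover[OF assms(2)] .
qed

lemma conn_conv: "dg_connected A (R\<inverse>) \<longleftrightarrow> dg_connected A R"
proof -
  have "R\<inverse> \<union> (R\<inverse>)\<inverse> = R \<union> R\<inverse>" by auto
  then show ?thesis unfolding dg_connected_def by simp
qed

lemma swap_ball: "(\<forall>x\<in>A. \<forall>y\<in>A. P y x) \<longleftrightarrow> (\<forall>x\<in>A. \<forall>y\<in>A. P x y)" by blast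

lemma iso_conv: "dg_iso A (R\<inverse>) B (Q\<inverse>) f \<longleftrightarrow> dg_iso A R B Q f"
  unfolding dg_iso_def converse_iff
  using swap_ball[of A "\<lambda>x y. ((x,y) \<in> R \<longleftrightarrow> (f x, f y) \<in> Q)"] by simp

lemma iso_conv2: "dg_iso A (R\<inverse>) B Q f \<longleftrightarrow> dg_iso A R B (Q\<inverse>) f"
  unfolding dg_iso_def converse_iff
  using swap_ball[of A "\<lambda>x y. ((x,y) \<in> R \<longleftrightarrow> (f y, f x) \<in> Q)"] by simp

lemma induced_conv: "induced (E\<inverse>) A = (induced E A)\<inverse>"
  unfolding induced_def by auto

lemma chom_conv: assumes "C_homogeneous V E" shows "C_homogeneous V (E\<inverse>)"
  unfolding C_homogeneous_def
proof (intro allI impI)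
  fix A B f assume h: "A \<subseteq> V \<and> B \<subseteq> V \<and> finite A \<and> dg_connected A (induced (E\<inverse>) A) \<and>
        dg_connected B (induced (E\<inverse>) B) \<and> dg_iso A (induced (E\<inverse>) A) B (induced (E\<inverse>) B) f"
  then have h': "A \<subseteq> V \<and> B \<subseteq> V \<and> finite A \<and> dg_connected A (induced E A) \<and>
        dg_connected B (induced E B) \<and> dg_iso A (induced E A) B (induced E B) f"
    by (simp only: induced_conv conn_conv iso_conv)
  have imp: "\<forall>A B f. A \<subseteq> V \<and> B \<subseteq> V \<and> finite A \<and> dg_connected A (induced E A) \<and>
        dg_connected B (induced E B) \<and> dg_iso A (induced E A) B (induced E B) f \<longrightarrow>
        (\<exists>g. dg_iso V E V E g \<and> (\<forall>x\<in>A. g x = f x))" using assms unfolding C_homogeneous_def .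
  obtain g where "dg_iso V E V E g" "\<forall>x\<in>A. g x = f x" using imp[rule_format, OF h'] by (elim exE conjE)
  then show "\<exists>g. dg_iso V (E\<inverse>) V (E\<inverse>) g \<and> (\<forall>x\<in>A. g x = f x)" using iso_conv[of V E V E g] by blast
qed

lemma dig_conv: "is_digraph V E \<Longrightarrow> is_digraph V (E\<inverse>)"
  unfolding is_digraph_def by auto

definition pi8 :: "nat \<Rightarrow> nat" where "pi8 h = [0,1,3,2,7,6,5,4] ! h"

lemma pi8_vals: "pi8 0 = 0" "pi8 1 = 1" "pi8 2 = 3" "pi8 3 = 2" "pi8 4 = 7" "pi8 5 = 6" "pi8 6 = 5" "pi8 7 = 4"
  by (simp_all add: pi8_def)

lemma less8: "(h::nat) < 8 \<Longrightarrow> h = 0 \<or> h = 1 \<or> h = 2 \<or> h = 3 \<or> h = 4 \<or> h = 5 \<or> h = 6 \<or> h = 7" by auto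

lemma pi8_lt: "h < 8 \<Longrightarrow> pi8 h < 8" using less8[of h] pi8_vals by auto
lemma pi8_inv: "h < 8 \<Longrightarrow> pi8 (pi8 h) = h" using less8[of h] pi8_vals by auto

lemma pi8_anti_all: "\<forall>a\<in>{0..<8::nat}. \<forall>b\<in>{0..<8::nat}. ((a,b) \<in> H_E) = ((pi8 b, pi8 a) \<in> H_E)"
  unfolding H_E_def pi8_def by code_simp

lemma pi8_anti: assumes "a < 8" "b < 8" shows "(a,b) \<in> H_E \<longleftrightarrow> (pi8 b, pi8 a) \<in> H_E"
proof -
  have "a \<in> {0..<8}" "b \<in> {0..<8}" using assms by auto
  then show ?thesis using pi8_anti_all by blast
qed

lemma lexE_mem: "((a,i),(b,j)) \<in> lex_E H_V H_E (Kbar_V n) Kbar_E \<longleftrightarrow>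
   a < 8 \<and> i < n \<and> b < 8 \<and> j < n \<and> (a,b) \<in> H_E"
  by (simp add: lex_E_def H_V_def Kbar_V_def Kbar_E_def)

lemma anti_iso:
  "dg_iso (lex_V H_V (Kbar_V n)) ((lex_E H_V H_E (Kbar_V n) Kbar_E)\<inverse>)
          (lex_V H_V (Kbar_V n)) (lex_E H_V H_E (Kbar_V n) Kbar_E) (\<lambda>(h,i). (pi8 h, i))"
proof -
  define L where "L = lex_V H_V (Kbar_V n)"
  have Lm: "(h,i) \<in> L \<longleftrightarrow> h < 8 \<and> i < n" for h i by (simp add: L_def lex_V_def H_V_def Kbar_V_def)
  define \<psi> :: "nat \<times> nat \<Rightarrow> nat \<times> nat" where "\<psi> = (\<lambda>(h,i). (pi8 h, i))"
  have psi: "\<psi> (h,i) = (pi8 h, i)" for h i by (simp add: \<psi>_def)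
  have inv: "\<forall>a\<in>L. \<psi> (\<psi> a) = a"
  proof
    fix a assume "a \<in> L"
    then obtain h i where a: "a = (h,i)" "h < 8" using Lm by (cases a) auto
    then show "\<psi> (\<psi> a) = a" using pi8_inv by (simp add: psi)
  qed
  have im: "\<psi> ` L \<subseteq> L"
  proof
    fix p assume "p \<in> \<psi> ` L"
    then obtain a where a: "a \<in> L" "p = \<psi> a" by blast
    then obtain h i where "a = (h,i)" "h < 8" "i < n" using Lm by (cases a) auto
    then show "p \<in> L" using a pi8_lt Lm by (simp add: psi)
  qed
  have bij: "bij_betw \<psi> L L" using bij_betw_byWitness[OF inv inv im im] .
  have ed: "(p,q) \<in> (lex_E H_V H_E (Kbar_V n) Kbar_E)\<inverse> \<longleftrightarrow> (\<psi> p, \<psi> q) \<in> lex_E H_V H_E (Kbar_V n) Kbar_E"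
    if "p \<in> L" "q \<in> L" for p q
  proof -
    obtain a i where p: "p = (a,i)" by (cases p)
    obtain b j where q: "q = (b,j)" by (cases q)
    have r: "a < 8" "b < 8" "i < n" "j < n" using that p q Lm by auto
    have "(p,q) \<in> (lex_E H_V H_E (Kbar_V n) Kbar_E)\<inverse> \<longleftrightarrow> (b,a) \<in> H_E"
      using r by (simp add: p q lexE_mem)
    also have "\<dots> \<longleftrightarrow> (pi8 a, pi8 b) \<in> H_E" using pi8_anti[OF r(2) r(1)] .
    also have "\<dots> \<longleftrightarrow> (\<psi> p, \<psi> q) \<in> lex_E H_V H_E (Kbar_V n) Kbar_E"
      using r pi8_lt[OF r(1)] pi8_lt[OF r(2)] by (simp add: p q psi lexE_mem)
    finally show ?thesis .
  qed
  have "dg_iso L ((lex_E H_V H_E (Kbar_V n) Kbar_E)\<inverse>) L (lex_E H_V H_E (Kbar_V n) Kbar_E) \<psi>"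
    unfolding dg_iso_def using bij ed by blast
  then show ?thesis unfolding L_def \<psi>_def .
qed

lemma iso_comp: assumes "dg_iso A R B Q f" "dg_iso B Q C S g" shows "dg_iso A R C S (g \<circ> f)"
proof -
  have b: "bij_betw f A B" "bij_betw g B C" using assms unfolding dg_iso_def by auto
  have e1: "\<forall>x\<in>A. \<forall>y\<in>A. (x,y) \<in> R \<longleftrightarrow> (f x, f y) \<in> Q" using assms(1) unfolding dg_iso_def by (elim conjE)
  have e2: "\<forall>x\<in>B. \<forall>y\<in>B. (x,y) \<in> Q \<longleftrightarrow> (g x, g y) \<in> S" using assms(2) unfolding dg_iso_def by (elim conjE)
  have "bij_betw (g \<circ> f) A C" using bij_betw_trans[OF b] .
  moreover have "\<forall>x\<in>A. \<forall>y\<in>A. (x,y) \<in> R \<longleftrightarrow> ((g \<circ> f) x, (g \<circ> f) y) \<in> S"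
  proof (intro ballI)
    fix x y assume xy: "x \<in> A" "y \<in> A"
    then have "f x \<in> B" "f y \<in> B" using b(1) bij_betwE by blast+
    then show "(x,y) \<in> R \<longleftrightarrow> ((g \<circ> f) x, (g \<circ> f) y) \<in> S" using e1 e2 xy by simp
  qed
  ultimately show ?thesis unfolding dg_iso_def by blast
qed

lemma out_conv: "out_nbhd (E\<inverse>) x = in_nbhd E x" by (auto simp: out_nbhd_def in_nbhd_def)

theorem lemma3p9:
  fixes V :: "'a set" and E :: "('a \<times> 'a) set" and x :: 'a and n :: nat
  assumes "is_digraph V E"
    and "dg_connected V E"
    and "locally_finite V E"
    and "C_homogeneous V E"
    and "x \<in> V"
    and "n \<ge> 1"
    and "dg_isomorphic (out_nbhd E x) (induced E (out_nbhd E x))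
           (lex_V C3_V (Kbar_V n)) (lex_E C3_V C3_E (Kbar_V n) Kbar_E)
       \<or> dg_isomorphic (in_nbhd E x) (induced E (in_nbhd E x))
           (lex_V C3_V (Kbar_V n)) (lex_E C3_V C3_E (Kbar_V n) Kbar_E)"
  shows "dg_isomorphic V E (lex_V H_V (Kbar_V n)) (lex_E H_V H_E (Kbar_V n) Kbar_E)"
  using assms(7)
proof
  assume "dg_isomorphic (out_nbhd E x) (induced E (out_nbhd E x))
           (lex_V C3_V (Kbar_V n)) (lex_E C3_V C3_E (Kbar_V n) Kbar_E)"
  then have "c3k E (out_nbhd E x) n" by (rule iso_c3k)
  then show ?thesis by (rule main_out[OF assms(1,2,4,5,6)])
next
  assume "dg_isomorphic (in_nbhd E x) (induced E (in_nbhd E x))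
           (lex_V C3_V (Kbar_V n)) (lex_E C3_V C3_E (Kbar_V n) Kbar_E)"
  then have "c3k E (in_nbhd E x) n" by (rule iso_c3k)
  then have "c3k (E\<inverse>) (in_nbhd E x) n" by (rule c3k_rev)
  then have c: "c3k (E\<inverse>) (out_nbhd (E\<inverse>) x) n" by (simp only: out_conv)
  have conn': "dg_connected V (E\<inverse>)" using assms(2) by (simp only: conn_conv)
  have "dg_isomorphic V (E\<inverse>) (lex_V H_V (Kbar_V n)) (lex_E H_V H_E (Kbar_V n) Kbar_E)"
    by (rule main_out[OF dig_conv[OF assms(1)] conn' chom_conv[OF assms(4)] assms(5,6) c])
  then obtain \<phi> where "dg_iso V (E\<inverse>) (lex_V H_V (Kbar_V n)) (lex_E H_V H_E (Kbar_V n) Kbar_E) \<phi>"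
    unfolding dg_isomorphic_def by blast
  then have "dg_iso V E (lex_V H_V (Kbar_V n)) ((lex_E H_V H_E (Kbar_V n) Kbar_E)\<inverse>) \<phi>"
    by (simp only: iso_conv2)
  then have "dg_iso V E (lex_V H_V (Kbar_V n)) (lex_E H_V H_E (Kbar_V n) Kbar_E) ((\<lambda>(h,i). (pi8 h, i)) \<circ> \<phi>)"
    by (rule iso_comp[OF _ anti_iso])
  then show ?thesis unfolding dg_isomorphic_def by blast
qed


end
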